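(* Let $(X,r)$ be a non-degenerate involutive set-theoretic solution of the Yang–Baxter equation with $|X|=n$, identified with $\{1,\dots,n\}$, and let $(\mathcal{X}^2,\tilde r)$ be the induced pair. Then, for every natural number $k\ge 1$, there exists a non-degenerate involutive set-theoretic solution of size $n^{2^k}$ induced from $(X,r)$, namely the one obtained by applying the construction $(X,r)\mapsto(\mathcal{X}^2,\tilde r)$ iteratively $k$ times. Furthermore: (i) if $(X,r)$ is irretractable, resp. a multipermutation solution of level $\ell$, then $(\mathcal{X}^2,\tilde r)$ is irretractable, resp. a multipermutation solution of level $\ell$; (ii) if $(X,r)$ is decomposable, then $(\mathcal{X}^2,\tilde r)$ is decomposable; (iii) if $(X,r)$ is of class $m$, then $(\mathcal{X}^2,\tilde r)$ is of class $m$. Assume moreover that $(X,r)$ is indecomposable and satisfies condition $(\mathfrak{C})$: there exists a natural number $\ell$ such that for every $1\le s\le n$ there exist $1\le i_1,\dots,i_\ell\le n$ with $\sigma_{i_1}\sigma_{i_2}\cdots\sigma_{i_\ell}(1)=s$. Then $(\mathcal{X}^2,\tilde r)$ is also indecomposable and satisfies condition $(\mathfrak{C})$ (with respect to its own permutations $g_i^k$ and the element $T_1^1$ in place of $1$). Moreover, the process can be repeated iteratively to obtain indecomposable solutions of size $n^{2^k}$ for every natural number $k\ge1$.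
   Context: A set-theoretic solution of the Yang–Baxter equation is a pair $(X,r)$ with $X$ a set and $r:X\times X\to X\times X$, written $r(x,y)=(\sigma_x(y),\gamma_y(x))$, such that $r^{12}r^{23}r^{12}=r^{23}r^{12}r^{23}$ on $X^3$, where $r^{12}=r\times \mathrm{Id}_X$, $r^{23}=\mathrm{Id}_X\times r$. It is non-degenerate if all $\sigma_x,\gamma_x$ are bijections of $X$, and involutive if $r\circ r=\mathrm{Id}_{X\times X}$. For $|X|=n$ we identify $X$ with $\{1,\dots,n\}$, so the $\sigma_i,\gamma_j$ are permutations of $\{1,\dots,n\}$. Induced pair: $\mathcal{X}^2=\{T_i^k: 1\le i,k\le n\}$ is a set of $n^2$ symbols in bijection with $X\times X$, and $\tilde r:\mathcal{X}^2\times\mathcal{X}^2\to\mathcal{X}^2\times\mathcal{X}^2$ is $\tilde r(T_i^k,T_j^l)=(T_{\sigma_i(j)}^{\sigma_k(l)},T_{\gamma_j(i)}^{\gamma_l(k)})$; we write $g_i^k(T_j^l)=T_{\sigma_i(j)}^{\sigma_k(l)}$ and $f_j^l(T_i^k)=T_{\gamma_j(i)}^{\gamma_l(k)}$, so $\tilde r(T_i^k,T_j^l)=(g_i^k(T_j^l),f_j^l(T_i^k))$. A subset $Y\subseteq X$ is invariant if $r(Y\times Y)\subseteq Y\times Y$, and non-degenerate invariant if moreover $(Y,r|_{Y^2})$ is a non-degenerate involutive solution; $(X,r)$ is decomposable if $X$ is the union of two non-empty disjoint non-degenerate invariant subsets, and indecomposable otherwise. Retraction: $x\sim y$ iff $\sigma_x=\sigma_y$;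 $\mathrm{Ret}(X,r)=(X/\!\sim, r')$ with $r'([x],[y])=([\sigma_x(y)],[\gamma_y(x)])$, and $\mathrm{Ret}^k=\mathrm{Ret}(\mathrm{Ret}^{k-1})$. $(X,r)$ is a multipermutation solution of level $\ell$ if $\ell$ is the smallest natural number with $|\mathrm{Ret}^\ell(X,r)|=1$; if such $\ell$ exists $(X,r)$ is retractable, otherwise irretractable. Class: with $D(x)=\sigma_x^{-1}(x)$, $(X,r)$ is of class $m$ if $m$ is the minimal natural number such that $\sigma_x\sigma_{D(x)}\sigma_{D^2(x)}\cdots\sigma_{D^{m-1}(x)}=\mathrm{Id}_X$ for every $x\in X$. *)

theory Defs
  imports Main
begin

text \<open>A map r(x,y) = (sigma_x(y), gamma_y(x)) on a carrier X is encoded by the two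
  families sigma, gamma :: 'a => 'a => 'a (sigma x is the map sigma_x, gamma y is gamma_y).\<close>

definition rmap :: "('a \<Rightarrow> 'a \<Rightarrow> 'a) \<Rightarrow> ('a \<Rightarrow> 'a \<Rightarrow> 'a) \<Rightarrow> 'a \<times> 'a \<Rightarrow> 'a \<times> 'a" where
  "rmap \<sigma> \<gamma> p = (\<sigma> (fst p) (snd p), \<gamma> (snd p) (fst p))"

definition r12 :: "('a \<Rightarrow> 'a \<Rightarrow> 'a) \<Rightarrow> ('a \<Rightarrow> 'a \<Rightarrow> 'a) \<Rightarrow> 'a \<times> 'a \<times> 'a \<Rightarrow> 'a \<times> 'a \<times> 'a" where
  "r12 \<sigma> \<gamma> t = (case t of (x, y, z) \<Rightarrow> (fst (rmap \<sigma> \<gamma> (x, y)), snd (rmap \<sigma> \<gamma> (x, y)), z))"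

definition r23 :: "('a \<Rightarrow> 'a \<Rightarrow> 'a) \<Rightarrow> ('a \<Rightarrow> 'a \<Rightarrow> 'a) \<Rightarrow> 'a \<times> 'a \<times> 'a \<Rightarrow> 'a \<times> 'a \<times> 'a" where
  "r23 \<sigma> \<gamma> t = (case t of (x, y, z) \<Rightarrow> (x, fst (rmap \<sigma> \<gamma> (y, z)), snd (rmap \<sigma> \<gamma> (y, z))))"

definition is_solution :: "'a set \<Rightarrow> ('a \<Rightarrow> 'a \<Rightarrow> 'a) \<Rightarrow> ('a \<Rightarrow> 'a \<Rightarrow> 'a) \<Rightarrow> bool" where
  "is_solution X \<sigma> \<gamma> \<longleftrightarrow>
     (\<forall>x\<in>X. \<forall>y\<in>X. rmap \<sigma> \<gamma> (x, y) \<in> X \<times> X) \<and>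
     (\<forall>x\<in>X. \<forall>y\<in>X. \<forall>z\<in>X.
        r12 \<sigma> \<gamma> (r23 \<sigma> \<gamma> (r12 \<sigma> \<gamma> (x, y, z))) = r23 \<sigma> \<gamma> (r12 \<sigma> \<gamma> (r23 \<sigma> \<gamma> (x, y, z))))"

definition nondegenerate :: "'a set \<Rightarrow> ('a \<Rightarrow> 'a \<Rightarrow> 'a) \<Rightarrow> ('a \<Rightarrow> 'a \<Rightarrow> 'a) \<Rightarrow> bool" where
  "nondegenerate X \<sigma> \<gamma> \<longleftrightarrow> (\<forall>x\<in>X. bij_betw (\<sigma> x) X X \<and> bij_betw (\<gamma> x) X X)"

definition involutive :: "'a set \<Rightarrow> ('a \<Rightarrow> 'a \<Rightarrow> 'a) \<Rightarrow> ('a \<Rightarrow> 'a \<Rightarrow> 'a) \<Rightarrow> bool" where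
  "involutive X \<sigma> \<gamma> \<longleftrightarrow> (\<forall>x\<in>X. \<forall>y\<in>X. rmap \<sigma> \<gamma> (rmap \<sigma> \<gamma> (x, y)) = (x, y))"

definition nd_inv_solution :: "'a set \<Rightarrow> ('a \<Rightarrow> 'a \<Rightarrow> 'a) \<Rightarrow> ('a \<Rightarrow> 'a \<Rightarrow> 'a) \<Rightarrow> bool" where
  "nd_inv_solution X \<sigma> \<gamma> \<longleftrightarrow> is_solution X \<sigma> \<gamma> \<and> nondegenerate X \<sigma> \<gamma> \<and> involutive X \<sigma> \<gamma>"

definition invariant_subset :: "'a set \<Rightarrow> ('a \<Rightarrow> 'a \<Rightarrow> 'a) \<Rightarrow> ('a \<Rightarrow> 'a \<Rightarrow> 'a) \<Rightarrow> 'a set \<Rightarrow> bool" where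
  "invariant_subset X \<sigma> \<gamma> Y \<longleftrightarrow> Y \<subseteq> X \<and> (\<forall>x\<in>Y. \<forall>y\<in>Y. rmap \<sigma> \<gamma> (x, y) \<in> Y \<times> Y)"

text \<open>Y is non-degenerate invariant if it is invariant and the restriction of r to Y x Y
  is a non-degenerate involutive solution (the restriction is represented by the same
  families sigma, gamma, now considered on the carrier Y).\<close>
definition nd_invariant_subset :: "'a set \<Rightarrow> ('a \<Rightarrow> 'a \<Rightarrow> 'a) \<Rightarrow> ('a \<Rightarrow> 'a \<Rightarrow> 'a) \<Rightarrow> 'a set \<Rightarrow> bool" where
  "nd_invariant_subset X \<sigma> \<gamma> Y \<longleftrightarrow> invariant_subset X \<sigma> \<gamma> Y \<and> nd_inv_solution Y \<sigma> \<gamma>"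

definition decomposable :: "'a set \<Rightarrow> ('a \<Rightarrow> 'a \<Rightarrow> 'a) \<Rightarrow> ('a \<Rightarrow> 'a \<Rightarrow> 'a) \<Rightarrow> bool" where
  "decomposable X \<sigma> \<gamma> \<longleftrightarrow> (\<exists>Y Z. Y \<noteq> {} \<and> Z \<noteq> {} \<and> Y \<inter> Z = {} \<and> Y \<union> Z = X \<and>
      nd_invariant_subset X \<sigma> \<gamma> Y \<and> nd_invariant_subset X \<sigma> \<gamma> Z)"

definition indecomposable :: "'a set \<Rightarrow> ('a \<Rightarrow> 'a \<Rightarrow> 'a) \<Rightarrow> ('a \<Rightarrow> 'a \<Rightarrow> 'a) \<Rightarrow> bool" where
  "indecomposable X \<sigma> \<gamma> \<longleftrightarrow> \<not> decomposable X \<sigma> \<gamma>"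

type_synonym 'a sol = "'a set \<times> ('a \<Rightarrow> 'a \<Rightarrow> 'a) \<times> ('a \<Rightarrow> 'a \<Rightarrow> 'a)"

text \<open>The retraction X/~ (x ~ y iff sigma_x = sigma_y) is represented, up to the canonical
  bijection, by a set of chosen representatives of the ~-classes, so that Ret stays in the
  same type and can be iterated. ret_rep X sigma x is the chosen representative of [x].\<close>
definition ret_rep :: "'a set \<Rightarrow> ('a \<Rightarrow> 'a \<Rightarrow> 'a) \<Rightarrow> 'a \<Rightarrow> 'a" where
  "ret_rep X \<sigma> x = (SOME y. y \<in> X \<and> (\<forall>z\<in>X. \<sigma> y z = \<sigma> x z))"

definition Ret :: "'a sol \<Rightarrow> 'a sol" where
  "Ret S = (case S of (X, \<sigma>, \<gamma>) \<Rightarrow>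
     (ret_rep X \<sigma> ` X, (\<lambda>x y. ret_rep X \<sigma> (\<sigma> x y)), (\<lambda>y x. ret_rep X \<sigma> (\<gamma> y x))))"

definition retractable :: "'a set \<Rightarrow> ('a \<Rightarrow> 'a \<Rightarrow> 'a) \<Rightarrow> ('a \<Rightarrow> 'a \<Rightarrow> 'a) \<Rightarrow> bool" where
  "retractable X \<sigma> \<gamma> \<longleftrightarrow> (\<exists>l::nat. card (fst ((Ret ^^ l) (X, \<sigma>, \<gamma>))) = 1)"

definition irretractable :: "'a set \<Rightarrow> ('a \<Rightarrow> 'a \<Rightarrow> 'a) \<Rightarrow> ('a \<Rightarrow> 'a \<Rightarrow> 'a) \<Rightarrow> bool" where
  "irretractable X \<sigma> \<gamma> \<longleftrightarrow> \<not> retractable X \<sigma> \<gamma>"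

definition mp_level :: "'a set \<Rightarrow> ('a \<Rightarrow> 'a \<Rightarrow> 'a) \<Rightarrow> ('a \<Rightarrow> 'a \<Rightarrow> 'a) \<Rightarrow> nat \<Rightarrow> bool" where
  "mp_level X \<sigma> \<gamma> l \<longleftrightarrow> card (fst ((Ret ^^ l) (X, \<sigma>, \<gamma>))) = 1 \<and>
      (\<forall>j<l. card (fst ((Ret ^^ j) (X, \<sigma>, \<gamma>))) \<noteq> 1)"

definition Dmap :: "'a set \<Rightarrow> ('a \<Rightarrow> 'a \<Rightarrow> 'a) \<Rightarrow> 'a \<Rightarrow> 'a" where
  "Dmap X \<sigma> x = inv_into X (\<sigma> x) x"

fun sigma_prod :: "'a set \<Rightarrow> ('a \<Rightarrow> 'a \<Rightarrow> 'a) \<Rightarrow> nat \<Rightarrow> 'a \<Rightarrow> 'a \<Rightarrow> 'a" where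
  "sigma_prod X \<sigma> 0 x = id"
| "sigma_prod X \<sigma> (Suc m) x = \<sigma> x \<circ> sigma_prod X \<sigma> m (Dmap X \<sigma> x)"

definition class_prop :: "'a set \<Rightarrow> ('a \<Rightarrow> 'a \<Rightarrow> 'a) \<Rightarrow> nat \<Rightarrow> bool" where
  "class_prop X \<sigma> m \<longleftrightarrow> (\<forall>x\<in>X. \<forall>z\<in>X. sigma_prod X \<sigma> m x z = z)"

definition of_class :: "'a set \<Rightarrow> ('a \<Rightarrow> 'a \<Rightarrow> 'a) \<Rightarrow> ('a \<Rightarrow> 'a \<Rightarrow> 'a) \<Rightarrow> nat \<Rightarrow> bool" where
  "of_class X \<sigma> \<gamma> m \<longleftrightarrow> m \<ge> 1 \<and> class_prop X \<sigma> m \<and> (\<forall>j. 1 \<le> j \<and> j < m \<longrightarrow> \<not> class_prop X \<sigma> j)"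

definition condC :: "'a set \<Rightarrow> ('a \<Rightarrow> 'a \<Rightarrow> 'a) \<Rightarrow> 'a \<Rightarrow> bool" where
  "condC X \<sigma> x0 \<longleftrightarrow> (\<exists>l::nat. \<forall>s\<in>X. \<exists>is. length is = l \<and> set is \<subseteq> X \<and>
       foldr (\<lambda>i f. \<sigma> i \<circ> f) is id x0 = s)"

text \<open>A solution on X = {1..n} is given by (n, sigma, gamma). The symbol T_i^k
  (1 <= i,k <= n) is identified with the number (i-1)*n + k in {1..n^2}; in particular
  T_1^1 = 1.\<close>
definition Tsym :: "nat \<Rightarrow> nat \<Rightarrow> nat \<Rightarrow> nat" where
  "Tsym n i k = (i - 1) * n + k"

definition Tlow :: "nat \<Rightarrow> nat \<Rightarrow> nat" where
  "Tlow n t = (t - 1) div n + 1"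

definition Tup :: "nat \<Rightarrow> nat \<Rightarrow> nat" where
  "Tup n t = (t - 1) mod n + 1"

definition ind_sigma :: "nat \<Rightarrow> (nat \<Rightarrow> nat \<Rightarrow> nat) \<Rightarrow> nat \<Rightarrow> nat \<Rightarrow> nat" where
  "ind_sigma n \<sigma> t u = Tsym n (\<sigma> (Tlow n t) (Tlow n u)) (\<sigma> (Tup n t) (Tup n u))"

definition ind_gamma :: "nat \<Rightarrow> (nat \<Rightarrow> nat \<Rightarrow> nat) \<Rightarrow> nat \<Rightarrow> nat \<Rightarrow> nat" where
  "ind_gamma n \<gamma> u t = Tsym n (\<gamma> (Tlow n u) (Tlow n t)) (\<gamma> (Tup n u) (Tup n t))"

type_synonym nsol = "nat \<times> (nat \<Rightarrow> nat \<Rightarrow> nat) \<times> (nat \<Rightarrow> nat \<Rightarrow> nat)"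

definition induced :: "nsol \<Rightarrow> nsol" where
  "induced S = (case S of (n, \<sigma>, \<gamma>) \<Rightarrow> (n ^ 2, ind_sigma n \<sigma>, ind_gamma n \<gamma>))"

end

theory Submission
  imports Defs
begin


lemma Tlow_Tsym[simp]: "i \<in> {1..n} \<Longrightarrow> k \<in> {1..n} \<Longrightarrow> Tlow n (Tsym n i k) = i"
proof -
  assume a: "i \<in> {1..n}" "k \<in> {1..n}"
  then obtain i' k' where ik: "i = Suc i'" "k = Suc k'" "k' < n" by (cases i; cases k) auto
  have "(k' + n * i') div n = i'" using ik by simp
  thus ?thesis using ik by (simp add: Tlow_def Tsym_def mult.commute add.commute)
qed

lemma Tup_Tsym[simp]: "i \<in> {1..n} \<Longrightarrow> k \<in> {1..n} \<Longrightarrow> Tup n (Tsym n i k) = k"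
proof -
  assume a: "i \<in> {1..n}" "k \<in> {1..n}"
  then obtain i' k' where ik: "i = Suc i'" "k = Suc k'" "k' < n" by (cases i; cases k) auto
  have "(k' + n * i') mod n = k'" using ik by simp
  thus ?thesis using ik by (simp add: Tup_def Tsym_def mult.commute add.commute)
qed

lemma Tsym_in: "i \<in> {1..n} \<Longrightarrow> k \<in> {1..n} \<Longrightarrow> Tsym n i k \<in> {1..n^2}"
proof -
  assume a: "i \<in> {1..n}" "k \<in> {1..n}"
  have "(i - 1) * n \<le> (n - 1) * n" using a by (intro mult_right_mono) auto
  hence "(i - 1) * n + k \<le> (n - 1) * n + n" using a by (intro add_mono) auto
  also have "\<dots> = n^2" using a by (cases n) (auto simp: power2_eq_square)
  finally show ?thesis using a by (simp add: Tsym_def)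
qed

lemma Tsym_inj: "i \<in> {1..n} \<Longrightarrow> k \<in> {1..n} \<Longrightarrow> j \<in> {1..n} \<Longrightarrow> l \<in> {1..n} \<Longrightarrow>
   Tsym n i k = Tsym n j l \<longleftrightarrow> i = j \<and> k = l"
  by (metis Tlow_Tsym Tup_Tsym)

lemma Tlow_in: "t \<in> {1..n^2} \<Longrightarrow> Tlow n t \<in> {1..n}"
proof -
  assume a: "t \<in> {1..n^2}"
  have "t - 1 < n * n" using a by (auto simp: power2_eq_square)
  hence "(t - 1) div n < n" by (simp add: less_mult_imp_div_less)
  thus ?thesis by (simp add: Tlow_def)
qed

lemma Tup_in: "t \<in> {1..n^2} \<Longrightarrow> Tup n t \<in> {1..n}"
proof -
  assume a: "t \<in> {1..n^2}"
  hence "n > 0" by (cases n) auto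
  thus ?thesis using mod_less_divisor[of n "t - 1"] by (simp add: Tup_def Suc_le_eq)
qed

lemma Tsym_Tlow_Tup: "t \<in> {1..n^2} \<Longrightarrow> Tsym n (Tlow n t) (Tup n t) = t"
  using div_mult_mod_eq[of "t - 1" n] by (auto simp: Tsym_def Tlow_def Tup_def)

definition Tset :: "nat \<Rightarrow> nat set \<Rightarrow> nat set \<Rightarrow> nat set" where
  "Tset n A B = (\<lambda>p. Tsym n (fst p) (snd p)) ` (A \<times> B)"

lemma Tset_full: "Tset n {1..n} {1..n} = {1..n^2}"
proof
  show "Tset n {1..n} {1..n} \<subseteq> {1..n^2}" unfolding Tset_def using Tsym_in by fastforce
next
  show "{1..n^2} \<subseteq> Tset n {1..n} {1..n}"
  proof
    fix t assume t: "t \<in> {1..n^2}"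
    have "t = (\<lambda>p. Tsym n (fst p) (snd p)) (Tlow n t, Tup n t)" using Tsym_Tlow_Tup[OF t] by simp
    moreover have "(Tlow n t, Tup n t) \<in> {1..n} \<times> {1..n}" using Tlow_in[OF t] Tup_in[OF t] by simp
    ultimately show "t \<in> Tset n {1..n} {1..n}" unfolding Tset_def by blast
  qed
qed

lemma ind_sigma_Tsym[simp]: "i \<in> {1..n} \<Longrightarrow> k \<in> {1..n} \<Longrightarrow> j \<in> {1..n} \<Longrightarrow> l \<in> {1..n} \<Longrightarrow>
   ind_sigma n \<sigma> (Tsym n i k) (Tsym n j l) = Tsym n (\<sigma> i j) (\<sigma> k l)"
  by (simp add: ind_sigma_def)

lemma ind_gamma_Tsym[simp]: "i \<in> {1..n} \<Longrightarrow> k \<in> {1..n} \<Longrightarrow> j \<in> {1..n} \<Longrightarrow> l \<in> {1..n} \<Longrightarrow>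
   ind_gamma n \<gamma> (Tsym n i k) (Tsym n j l) = Tsym n (\<gamma> i j) (\<gamma> k l)"
  by (simp add: ind_gamma_def)


lemma ball_Tset: "(\<forall>t\<in>Tset n A B. P t) \<longleftrightarrow> (\<forall>i\<in>A. \<forall>k\<in>B. P (Tsym n i k))"
  unfolding Tset_def by auto

lemma Tsym_in_Tset: "i \<in> A \<Longrightarrow> k \<in> B \<Longrightarrow> Tsym n i k \<in> Tset n A B"
  unfolding Tset_def by (rule image_eqI[where x="(i,k)"]) auto

lemma Tset_sub: "A \<subseteq> {1..n} \<Longrightarrow> B \<subseteq> {1..n} \<Longrightarrow> Tset n A B \<subseteq> {1..n^2}"
proof
  fix t assume "A \<subseteq> {1..n}" "B \<subseteq> {1..n}" "t \<in> Tset n A B"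
  then obtain i k where ik: "i \<in> A" "k \<in> B" "t = Tsym n i k" unfolding Tset_def by auto
  thus "t \<in> {1..n^2}" using Tsym_in \<open>A \<subseteq> {1..n}\<close> \<open>B \<subseteq> {1..n}\<close> by blast
qed

lemma Tset_mem: "A \<subseteq> {1..n} \<Longrightarrow> B \<subseteq> {1..n} \<Longrightarrow> i \<in> {1..n} \<Longrightarrow> k \<in> {1..n} \<Longrightarrow>
   (Tsym n i k \<in> Tset n A B) = (i \<in> A \<and> k \<in> B)"
proof
  assume A: "A \<subseteq> {1..n}" "B \<subseteq> {1..n}" "i \<in> {1..n}" "k \<in> {1..n}" "Tsym n i k \<in> Tset n A B"
  then obtain j l where "j \<in> A" "l \<in> B" "Tsym n i k = Tsym n j l" unfolding Tset_def by auto
  moreover have "j \<in> {1..n}" "l \<in> {1..n}" using A calculation by auto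
  ultimately show "i \<in> A \<and> k \<in> B" using A Tsym_inj[of i n k j l] by auto
next
  assume "i \<in> A \<and> k \<in> B" thus "Tsym n i k \<in> Tset n A B" by (simp add: Tsym_in_Tset)
qed

lemma TlowAB[simp]: "A \<subseteq> {1..n} \<Longrightarrow> B \<subseteq> {1..n} \<Longrightarrow> i \<in> A \<Longrightarrow> k \<in> B \<Longrightarrow> Tlow n (Tsym n i k) = i"
  by (meson Tlow_Tsym subsetD)
lemma TupAB[simp]: "A \<subseteq> {1..n} \<Longrightarrow> B \<subseteq> {1..n} \<Longrightarrow> i \<in> A \<Longrightarrow> k \<in> B \<Longrightarrow> Tup n (Tsym n i k) = k"
  by (meson Tup_Tsym subsetD)

lemma TsymAB_eq: "A \<subseteq> {1..n} \<Longrightarrow> B \<subseteq> {1..n} \<Longrightarrow> i \<in> A \<Longrightarrow> k \<in> B \<Longrightarrow> j \<in> A \<Longrightarrow> l \<in> B \<Longrightarrow>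
   Tsym n i k = Tsym n j l \<longleftrightarrow> i = j \<and> k = l"
  using Tsym_inj by blast

lemma ybe_comp:
  assumes "is_solution X \<sigma> \<gamma>" "x \<in> X" "y \<in> X" "z \<in> X"
  shows "\<sigma> (\<sigma> x y) (\<sigma> (\<gamma> y x) z) = \<sigma> x (\<sigma> y z)"
    "\<gamma> (\<sigma> (\<gamma> y x) z) (\<sigma> x y) = \<sigma> (\<gamma> (\<sigma> y z) x) (\<gamma> z y)"
    "\<gamma> z (\<gamma> y x) = \<gamma> (\<gamma> z y) (\<gamma> (\<sigma> y z) x)"
proof -
  have "r12 \<sigma> \<gamma> (r23 \<sigma> \<gamma> (r12 \<sigma> \<gamma> (x, y, z))) = r23 \<sigma> \<gamma> (r12 \<sigma> \<gamma> (r23 \<sigma> \<gamma> (x, y, z)))"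
    using assms unfolding is_solution_def by blast
  thus "\<sigma> (\<sigma> x y) (\<sigma> (\<gamma> y x) z) = \<sigma> x (\<sigma> y z)"
    "\<gamma> (\<sigma> (\<gamma> y x) z) (\<sigma> x y) = \<sigma> (\<gamma> (\<sigma> y z) x) (\<gamma> z y)"
    "\<gamma> z (\<gamma> y x) = \<gamma> (\<gamma> z y) (\<gamma> (\<sigma> y z) x)"
    by (simp_all add: r12_def r23_def rmap_def)
qed

lemma sol_closed:
  assumes "is_solution X \<sigma> \<gamma>" "x \<in> X" "y \<in> X"
  shows "\<sigma> x y \<in> X" "\<gamma> y x \<in> X"
  using assms unfolding is_solution_def rmap_def by auto

lemma inv_comp:
  assumes "involutive X \<sigma> \<gamma>" "x \<in> X" "y \<in> X"
  shows "\<sigma> (\<sigma> x y) (\<gamma> y x) = x" "\<gamma> (\<gamma> y x) (\<sigma> x y) = y"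
  using assms unfolding involutive_def rmap_def by auto

lemma bij_prod_T:
  assumes AB: "A \<subseteq> {1..n}" "B \<subseteq> {1..n}" and a: "bij_betw a A A" and b: "bij_betw b B B"
  shows "bij_betw (\<lambda>u. Tsym n (a (Tlow n u)) (b (Tup n u))) (Tset n A B) (Tset n A B)"
  unfolding bij_betw_def
proof
  have aA: "\<And>i. i \<in> A \<Longrightarrow> a i \<in> A" and bB: "\<And>i. i \<in> B \<Longrightarrow> b i \<in> B"
    using a b by (auto simp: bij_betw_def)
  have ai: "inj_on a A" "inj_on b B" using a b by (auto simp: bij_betw_def)
  show "inj_on (\<lambda>u. Tsym n (a (Tlow n u)) (b (Tup n u))) (Tset n A B)"
  proof (rule inj_onI)
    fix u v assume u: "u \<in> Tset n A B" and v: "v \<in> Tset n A B"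
      and e: "Tsym n (a (Tlow n u)) (b (Tup n u)) = Tsym n (a (Tlow n v)) (b (Tup n v))"
    from u obtain i k where u': "u = Tsym n i k" "i \<in> A" "k \<in> B" unfolding Tset_def by auto
    from v obtain j l where v': "v = Tsym n j l" "j \<in> A" "l \<in> B" unfolding Tset_def by auto
    have "a i = a j \<and> b k = b l" using e u' v' AB aA bB TsymAB_eq[OF AB] by simp
    thus "u = v" using u' v' ai by (auto dest: inj_onD)
  qed
  show "(\<lambda>u. Tsym n (a (Tlow n u)) (b (Tup n u))) ` Tset n A B = Tset n A B"
  proof
    show "(\<lambda>u. Tsym n (a (Tlow n u)) (b (Tup n u))) ` Tset n A B \<subseteq> Tset n A B"
      using AB aA bB by (auto simp: Tset_def intro!: Tsym_in_Tset[simplified Tset_def])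
    show "Tset n A B \<subseteq> (\<lambda>u. Tsym n (a (Tlow n u)) (b (Tup n u))) ` Tset n A B"
    proof
      fix v assume v: "v \<in> Tset n A B"
      from v obtain j l where v': "v = Tsym n j l" "j \<in> A" "l \<in> B" unfolding Tset_def by auto
      obtain i where i: "i \<in> A" "a i = j" using a v' by (metis bij_betw_def imageE)
      obtain k where k: "k \<in> B" "b k = l" using b v' by (metis bij_betw_def imageE)
      have "v = (\<lambda>u. Tsym n (a (Tlow n u)) (b (Tup n u))) (Tsym n i k)" using i k v' AB by simp
      thus "v \<in> (\<lambda>u. Tsym n (a (Tlow n u)) (b (Tup n u))) ` Tset n A B"
        using Tsym_in_Tset[OF i(1) k(1)] by blast
    qed
  qed
qed


lemma Tset_solution:
  assumes AB: "A \<subseteq> {1..n}" "B \<subseteq> {1..n}" and sA: "nd_inv_solution A \<sigma> \<gamma>" and sB: "nd_inv_solution B \<sigma> \<gamma>"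
  shows "nd_inv_solution (Tset n A B) (ind_sigma n \<sigma>) (ind_gamma n \<gamma>)"
proof -
  have isA: "is_solution A \<sigma> \<gamma>" and isB: "is_solution B \<sigma> \<gamma>"
    and ndA: "nondegenerate A \<sigma> \<gamma>" and ndB: "nondegenerate B \<sigma> \<gamma>"
    and ivA: "involutive A \<sigma> \<gamma>" and ivB: "involutive B \<sigma> \<gamma>"
    using sA sB by (auto simp: nd_inv_solution_def)
  have cA: "\<And>x y. x \<in> A \<Longrightarrow> y \<in> A \<Longrightarrow> \<sigma> x y \<in> A" "\<And>x y. x \<in> A \<Longrightarrow> y \<in> A \<Longrightarrow> \<gamma> x y \<in> A"
    using sol_closed[OF isA] by auto
  have cB: "\<And>x y. x \<in> B \<Longrightarrow> y \<in> B \<Longrightarrow> \<sigma> x y \<in> B" "\<And>x y. x \<in> B \<Longrightarrow> y \<in> B \<Longrightarrow> \<gamma> x y \<in> B"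
    using sol_closed[OF isB] by auto
  have gT: "\<And>i k j l. i \<in> A \<Longrightarrow> j \<in> A \<Longrightarrow> k \<in> B \<Longrightarrow> l \<in> B \<Longrightarrow>
      ind_sigma n \<sigma> (Tsym n i k) (Tsym n j l) = Tsym n (\<sigma> i j) (\<sigma> k l)"
    using AB by (simp add: ind_sigma_def)
  have fT: "\<And>i k j l. i \<in> A \<Longrightarrow> j \<in> A \<Longrightarrow> k \<in> B \<Longrightarrow> l \<in> B \<Longrightarrow>
      ind_gamma n \<gamma> (Tsym n i k) (Tsym n j l) = Tsym n (\<gamma> i j) (\<gamma> k l)"
    using AB by (simp add: ind_gamma_def)
  have is2: "is_solution (Tset n A B) (ind_sigma n \<sigma>) (ind_gamma n \<gamma>)"
    unfolding is_solution_def ball_Tset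
  proof (intro conjI ballI)
    fix i k j l assume a: "i \<in> A" "k \<in> B" "j \<in> A" "l \<in> B"
    show "rmap (ind_sigma n \<sigma>) (ind_gamma n \<gamma>) (Tsym n i k, Tsym n j l) \<in> Tset n A B \<times> Tset n A B"
      using a by (simp add: rmap_def gT fT cA cB Tsym_in_Tset)
  next
    fix i k j l p q assume a: "i \<in> A" "k \<in> B" "j \<in> A" "l \<in> B" "p \<in> A" "q \<in> B"
    note e1 = ybe_comp[OF isA a(1) a(3) a(5)]
    note e2 = ybe_comp[OF isB a(2) a(4) a(6)]
    show "r12 (ind_sigma n \<sigma>) (ind_gamma n \<gamma>) (r23 (ind_sigma n \<sigma>) (ind_gamma n \<gamma>) (r12 (ind_sigma n \<sigma>) (ind_gamma n \<gamma>) (Tsym n i k, Tsym n j l, Tsym n p q))) =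
          r23 (ind_sigma n \<sigma>) (ind_gamma n \<gamma>) (r12 (ind_sigma n \<sigma>) (ind_gamma n \<gamma>) (r23 (ind_sigma n \<sigma>) (ind_gamma n \<gamma>) (Tsym n i k, Tsym n j l, Tsym n p q)))"
      using a by (simp add: rmap_def r12_def r23_def gT fT cA cB e1 e2)
  qed
  have iv2: "involutive (Tset n A B) (ind_sigma n \<sigma>) (ind_gamma n \<gamma>)"
    unfolding involutive_def ball_Tset
    by (simp add: rmap_def gT fT cA cB inv_comp[OF ivA] inv_comp[OF ivB])
  have nd2: "nondegenerate (Tset n A B) (ind_sigma n \<sigma>) (ind_gamma n \<gamma>)"
    unfolding nondegenerate_def ball_Tset
  proof (intro ballI conjI)
    fix i k assume ik: "i \<in> A" "k \<in> B"
    have "ind_sigma n \<sigma> (Tsym n i k) = (\<lambda>u. Tsym n (\<sigma> i (Tlow n u)) (\<sigma> k (Tup n u)))"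
      using ik AB by (intro ext) (simp add: ind_sigma_def)
    moreover have "bij_betw (\<sigma> i) A A" "bij_betw (\<sigma> k) B B" using ndA ndB ik by (auto simp: nondegenerate_def)
    ultimately show "bij_betw (ind_sigma n \<sigma> (Tsym n i k)) (Tset n A B) (Tset n A B)"
      using bij_prod_T[OF AB] by simp
    have "ind_gamma n \<gamma> (Tsym n i k) = (\<lambda>u. Tsym n (\<gamma> i (Tlow n u)) (\<gamma> k (Tup n u)))"
      using ik AB by (intro ext) (simp add: ind_gamma_def)
    moreover have "bij_betw (\<gamma> i) A A" "bij_betw (\<gamma> k) B B" using ndA ndB ik by (auto simp: nondegenerate_def)
    ultimately show "bij_betw (ind_gamma n \<gamma> (Tsym n i k)) (Tset n A B) (Tset n A B)"
      using bij_prod_T[OF AB] by simp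
  qed
  show ?thesis using is2 iv2 nd2 by (simp add: nd_inv_solution_def)
qed


lemma induced_sol: "nd_inv_solution {1..n} \<sigma> \<gamma> \<Longrightarrow> nd_inv_solution {1..n^2} (ind_sigma n \<sigma>) (ind_gamma n \<gamma>)"
proof -
  assume s: "nd_inv_solution {1..n} \<sigma> \<gamma>"
  have "nd_inv_solution (Tset n {1..n} {1..n}) (ind_sigma n \<sigma>) (ind_gamma n \<gamma>)"
    by (rule Tset_solution[OF _ _ s s]) auto
  thus ?thesis unfolding Tset_full .
qed

lemma induced_decomp:
  assumes sol: "nd_inv_solution {1..n} \<sigma> \<gamma>" and d: "decomposable {1..n} \<sigma> \<gamma>"
  shows "decomposable {1..n^2} (ind_sigma n \<sigma>) (ind_gamma n \<gamma>)"
proof -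
  obtain Y Z where YZ: "Y \<noteq> {}" "Z \<noteq> {}" "Y \<inter> Z = {}" "Y \<union> Z = {1..n}"
    "nd_invariant_subset {1..n} \<sigma> \<gamma> Y" "nd_invariant_subset {1..n} \<sigma> \<gamma> Z"
    using d unfolding decomposable_def by blast
  have Ysub: "Y \<subseteq> {1..n}" and Zsub: "Z \<subseteq> {1..n}" using YZ(4) by auto
  have sY: "nd_inv_solution Y \<sigma> \<gamma>" and sZ: "nd_inv_solution Z \<sigma> \<gamma>"
    using YZ(5,6) by (auto simp: nd_invariant_subset_def)
  have n1: "1 \<in> {1..n}" using YZ(1) Ysub by auto
  define Y2 where "Y2 = Tset n Y {1..n}"
  define Z2 where "Z2 = Tset n Z {1..n}"
  have sY2: "nd_inv_solution Y2 (ind_sigma n \<sigma>) (ind_gamma n \<gamma>)"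
    unfolding Y2_def by (rule Tset_solution[OF Ysub _ sY sol]) simp
  have sZ2: "nd_inv_solution Z2 (ind_sigma n \<sigma>) (ind_gamma n \<gamma>)"
    unfolding Z2_def by (rule Tset_solution[OF Zsub _ sZ sol]) simp
  have Y2sub: "Y2 \<subseteq> {1..n^2}" unfolding Y2_def by (rule Tset_sub[OF Ysub]) simp
  have Z2sub: "Z2 \<subseteq> {1..n^2}" unfolding Z2_def by (rule Tset_sub[OF Zsub]) simp
  have "nd_invariant_subset {1..n^2} (ind_sigma n \<sigma>) (ind_gamma n \<gamma>) Y2"
    using sY2 Y2sub unfolding nd_invariant_subset_def invariant_subset_def nd_inv_solution_def is_solution_def
    by blast
  moreover have "nd_invariant_subset {1..n^2} (ind_sigma n \<sigma>) (ind_gamma n \<gamma>) Z2"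
    using sZ2 Z2sub unfolding nd_invariant_subset_def invariant_subset_def nd_inv_solution_def is_solution_def
    by blast
  moreover have "Y2 \<noteq> {}" using YZ(1) n1 Tsym_in_Tset unfolding Y2_def by blast
  moreover have "Z2 \<noteq> {}" using YZ(2) n1 Tsym_in_Tset unfolding Z2_def by blast
  moreover have "Y2 \<inter> Z2 = {}"
  proof (rule ccontr)
    assume "Y2 \<inter> Z2 \<noteq> {}"
    then obtain t where "t \<in> Y2" "t \<in> Z2" by blast
    then obtain i k j l where "i \<in> Y" "k \<in> {1..n}" "j \<in> Z" "l \<in> {1..n}" "Tsym n i k = Tsym n j l"
      unfolding Y2_def Z2_def Tset_def by auto
    moreover have "i \<in> {1..n}" "j \<in> {1..n}" using calculation Ysub Zsub by auto
    ultimately have "i = j" using Tsym_inj by blast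
    thus False using \<open>i \<in> Y\<close> \<open>j \<in> Z\<close> YZ(3) by blast
  qed
  moreover have "Y2 \<union> Z2 = {1..n^2}"
  proof -
    have "Y2 \<union> Z2 = Tset n (Y \<union> Z) {1..n}" unfolding Y2_def Z2_def Tset_def by blast
    thus ?thesis using YZ(4) Tset_full by simp
  qed
  ultimately show ?thesis unfolding decomposable_def by blast
qed

lemma Dmap_in: "nd_inv_solution X \<sigma> \<gamma> \<Longrightarrow> i \<in> X \<Longrightarrow> Dmap X \<sigma> i \<in> X \<and> \<sigma> i (Dmap X \<sigma> i) = i"
  unfolding Dmap_def nd_inv_solution_def nondegenerate_def
  by (metis bij_betw_def f_inv_into_f inv_into_into)

lemma Dmap_T:
  assumes sol: "nd_inv_solution {1..n} \<sigma> \<gamma>" and ik: "i \<in> {1..n}" "k \<in> {1..n}"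
  shows "Dmap {1..n^2} (ind_sigma n \<sigma>) (Tsym n i k) = Tsym n (Dmap {1..n} \<sigma> i) (Dmap {1..n} \<sigma> k)"
proof -
  have s2: "nd_inv_solution {1..n^2} (ind_sigma n \<sigma>) (ind_gamma n \<gamma>)" using induced_sol[OF sol] .
  have t: "Tsym n i k \<in> {1..n^2}" using ik Tsym_in by blast
  have inj: "inj_on (ind_sigma n \<sigma> (Tsym n i k)) {1..n^2}"
    using s2 t unfolding nd_inv_solution_def nondegenerate_def bij_betw_def by blast
  have D: "Dmap {1..n} \<sigma> i \<in> {1..n}" "\<sigma> i (Dmap {1..n} \<sigma> i) = i"
     "Dmap {1..n} \<sigma> k \<in> {1..n}" "\<sigma> k (Dmap {1..n} \<sigma> k) = k"
    using Dmap_in[OF sol] ik by auto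
  show ?thesis unfolding Dmap_def[of "{1..n^2}"]
    apply (rule inv_into_f_eq[OF inj])
    using D ik Tsym_in apply blast
    using D ik by simp
qed

lemma sp_T:
  assumes sol: "nd_inv_solution {1..n} \<sigma> \<gamma>"
  shows "i \<in> {1..n} \<Longrightarrow> k \<in> {1..n} \<Longrightarrow> j \<in> {1..n} \<Longrightarrow> l \<in> {1..n} \<Longrightarrow>
    sigma_prod {1..n^2} (ind_sigma n \<sigma>) m (Tsym n i k) (Tsym n j l)
      = Tsym n (sigma_prod {1..n} \<sigma> m i j) (sigma_prod {1..n} \<sigma> m k l)
    \<and> sigma_prod {1..n} \<sigma> m i j \<in> {1..n} \<and> sigma_prod {1..n} \<sigma> m k l \<in> {1..n}"
proof (induction m arbitrary: i k j l)
  case 0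
  then show ?case by simp
next
  case (Suc m)
  have isX: "is_solution {1..n} \<sigma> \<gamma>" using sol by (simp add: nd_inv_solution_def)
  have D: "Dmap {1..n} \<sigma> i \<in> {1..n}" "Dmap {1..n} \<sigma> k \<in> {1..n}"
    using Dmap_in[OF sol] Suc.prems by auto
  note IH = Suc.IH[OF D(1) D(2) Suc.prems(3) Suc.prems(4)]
  have "sigma_prod {1..n^2} (ind_sigma n \<sigma>) (Suc m) (Tsym n i k) (Tsym n j l) =
     ind_sigma n \<sigma> (Tsym n i k) (sigma_prod {1..n^2} (ind_sigma n \<sigma>) m (Tsym n (Dmap {1..n} \<sigma> i) (Dmap {1..n} \<sigma> k)) (Tsym n j l))"
    using Dmap_T[OF sol Suc.prems(1,2)] by simp
  also have "\<dots> = Tsym n (sigma_prod {1..n} \<sigma> (Suc m) i j) (sigma_prod {1..n} \<sigma> (Suc m) k l)"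
    using IH Suc.prems by simp
  finally show ?case using IH Suc.prems sol_closed[OF isX] by simp
qed

lemma class_prop_T:
  assumes sol: "nd_inv_solution {1..n} \<sigma> \<gamma>"
  shows "class_prop {1..n^2} (ind_sigma n \<sigma>) m = class_prop {1..n} \<sigma> m"
proof (cases "n = 0")
  case True
  then show ?thesis by (simp add: class_prop_def)
next
  case False
  hence n1: "1 \<in> {1..n}" by simp
  have "class_prop {1..n^2} (ind_sigma n \<sigma>) m \<longleftrightarrow>
    (\<forall>i\<in>{1..n}. \<forall>k\<in>{1..n}. \<forall>j\<in>{1..n}. \<forall>l\<in>{1..n}.
      sigma_prod {1..n} \<sigma> m i j = j \<and> sigma_prod {1..n} \<sigma> m k l = l)"
  proof -
    have eq: "\<And>i k j l. i \<in> {1..n} \<Longrightarrow> k \<in> {1..n} \<Longrightarrow> j \<in> {1..n} \<Longrightarrow> l \<in> {1..n} \<Longrightarrow>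
      (sigma_prod {1..n^2} (ind_sigma n \<sigma>) m (Tsym n i k) (Tsym n j l) = Tsym n j l) \<longleftrightarrow>
      (sigma_prod {1..n} \<sigma> m i j = j \<and> sigma_prod {1..n} \<sigma> m k l = l)"
    proof -
      fix i k j l assume a: "i \<in> {1..n}" "k \<in> {1..n}" "j \<in> {1..n}" "l \<in> {1..n}"
      note h = sp_T[OF sol a, of m]
      show "(sigma_prod {1..n^2} (ind_sigma n \<sigma>) m (Tsym n i k) (Tsym n j l) = Tsym n j l) \<longleftrightarrow>
      (sigma_prod {1..n} \<sigma> m i j = j \<and> sigma_prod {1..n} \<sigma> m k l = l)"
        using h Tsym_inj[OF _ _ a(3) a(4)] by simp
    qed
    have "class_prop {1..n^2} (ind_sigma n \<sigma>) m \<longleftrightarrow>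
      (\<forall>i\<in>{1..n}. \<forall>k\<in>{1..n}. \<forall>j\<in>{1..n}. \<forall>l\<in>{1..n}.
       sigma_prod {1..n^2} (ind_sigma n \<sigma>) m (Tsym n i k) (Tsym n j l) = Tsym n j l)"
      unfolding class_prop_def Tset_full[symmetric] ball_Tset ..
    also have "\<dots> \<longleftrightarrow> (\<forall>i\<in>{1..n}. \<forall>k\<in>{1..n}. \<forall>j\<in>{1..n}. \<forall>l\<in>{1..n}.
      sigma_prod {1..n} \<sigma> m i j = j \<and> sigma_prod {1..n} \<sigma> m k l = l)"
      using eq by (intro ball_cong refl) blast
    finally show ?thesis .
  qed
  also have "\<dots> \<longleftrightarrow> class_prop {1..n} \<sigma> m"
    unfolding class_prop_def using n1 by blast
  finally show ?thesis .
qed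

lemma of_class_T:
  assumes sol: "nd_inv_solution {1..n} \<sigma> \<gamma>"
  shows "of_class {1..n^2} (ind_sigma n \<sigma>) g' m = of_class {1..n} \<sigma> \<gamma> m"
  unfolding of_class_def class_prop_T[OF sol] ..


lemma foldr_T:
  assumes sol: "nd_inv_solution {1..n} \<sigma> \<gamma>"
  shows "length xs = length ks \<Longrightarrow> set xs \<subseteq> {1..n} \<Longrightarrow> set ks \<subseteq> {1..n} \<Longrightarrow> x \<in> {1..n} \<Longrightarrow> y \<in> {1..n} \<Longrightarrow>
    foldr (\<lambda>i f. ind_sigma n \<sigma> i \<circ> f) (map2 (Tsym n) xs ks) id (Tsym n x y)
      = Tsym n (foldr (\<lambda>i f. \<sigma> i \<circ> f) xs id x) (foldr (\<lambda>i f. \<sigma> i \<circ> f) ks id y)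
    \<and> foldr (\<lambda>i f. \<sigma> i \<circ> f) xs id x \<in> {1..n} \<and> foldr (\<lambda>i f. \<sigma> i \<circ> f) ks id y \<in> {1..n}"
proof (induction "xs" arbitrary: ks)
  case Nil
  then show ?case by simp
next
  case (Cons a xs')
  have isX: "is_solution {1..n} \<sigma> \<gamma>" using sol by (simp add: nd_inv_solution_def)
  from Cons.prems obtain b ks' where ks: "ks = b # ks'" by (cases ks) auto
  have IH: "foldr (\<lambda>i f. ind_sigma n \<sigma> i \<circ> f) (map2 (Tsym n) xs' ks') id (Tsym n x y)
      = Tsym n (foldr (\<lambda>i f. \<sigma> i \<circ> f) xs' id x) (foldr (\<lambda>i f. \<sigma> i \<circ> f) ks' id y)
    \<and> foldr (\<lambda>i f. \<sigma> i \<circ> f) xs' id x \<in> {1..n} \<and> foldr (\<lambda>i f. \<sigma> i \<circ> f) ks' id y \<in> {1..n}"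
    by (rule Cons.IH) (use Cons.prems ks in auto)
  have ab: "a \<in> {1..n}" "b \<in> {1..n}" using Cons.prems ks by auto
  define F where "F = foldr (\<lambda>i f. \<sigma> i \<circ> f) xs' id x"
  define G where "G = foldr (\<lambda>i f. \<sigma> i \<circ> f) ks' id y"
  have FG: "F \<in> {1..n}" "G \<in> {1..n}" using IH unfolding F_def G_def by auto
  have e1: "foldr (\<lambda>i f. ind_sigma n \<sigma> i \<circ> f) (map2 (Tsym n) (a # xs') (b # ks')) id (Tsym n x y)
     = ind_sigma n \<sigma> (Tsym n a b) (foldr (\<lambda>i f. ind_sigma n \<sigma> i \<circ> f) (map2 (Tsym n) xs' ks') id (Tsym n x y))"
    by simp
  also have "\<dots> = ind_sigma n \<sigma> (Tsym n a b) (Tsym n F G)" using IH unfolding F_def G_def by simp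
  also have "\<dots> = Tsym n (\<sigma> a F) (\<sigma> b G)" using ab FG by simp
  finally have e: "foldr (\<lambda>i f. ind_sigma n \<sigma> i \<circ> f) (map2 (Tsym n) (a # xs') (b # ks')) id (Tsym n x y) =
      Tsym n (\<sigma> a F) (\<sigma> b G)" .
  have e2: "foldr (\<lambda>i f. \<sigma> i \<circ> f) (a # xs') id x = \<sigma> a F" unfolding F_def by simp
  have e3: "foldr (\<lambda>i f. \<sigma> i \<circ> f) (b # ks') id y = \<sigma> b G" unfolding G_def by simp
  have "\<sigma> a F \<in> {1..n}" "\<sigma> b G \<in> {1..n}" using sol_closed[OF isX] ab FG by auto
  then show ?case unfolding ks e e2 e3 by simp
qed

lemma condC_T:
  assumes sol: "nd_inv_solution {1..n} \<sigma> \<gamma>" and c: "condC {1..n} \<sigma> 1"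
  shows "condC {1..n^2} (ind_sigma n \<sigma>) 1"
proof (cases "n = 0")
  case True
  then show ?thesis by (simp add: condC_def)
next
  case False
  hence n1: "1 \<in> {1..n}" by simp
  have one: "Tsym n 1 1 = 1" by (simp add: Tsym_def)
  obtain l where l: "\<forall>s\<in>{1..n}. \<exists>xs. length xs = l \<and> set xs \<subseteq> {1..n} \<and> foldr (\<lambda>i f. \<sigma> i \<circ> f) xs id 1 = s"
    using c unfolding condC_def by blast
  show ?thesis unfolding condC_def
  proof (intro exI[of _ l] ballI)
    fix s assume s: "s \<in> {1..n^2}"
    obtain xs where xs: "length xs = l" "set xs \<subseteq> {1..n}" "foldr (\<lambda>i f. \<sigma> i \<circ> f) xs id 1 = Tlow n s"
      using l Tlow_in[OF s] by blast
    obtain ks where ks: "length ks = l" "set ks \<subseteq> {1..n}" "foldr (\<lambda>i f. \<sigma> i \<circ> f) ks id 1 = Tup n s"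
      using l Tup_in[OF s] by blast
    have "foldr (\<lambda>i f. ind_sigma n \<sigma> i \<circ> f) (map2 (Tsym n) xs ks) id 1 = s"
      using foldr_T[OF sol _ xs(2) ks(2) n1 n1] xs ks one Tsym_Tlow_Tup[OF s] by simp
    moreover have "set (map2 (Tsym n) xs ks) \<subseteq> {1..n^2}"
    proof
      fix t assume "t \<in> set (map2 (Tsym n) xs ks)"
      then obtain a b where "(a, b) \<in> set (zip xs ks)" "t = Tsym n a b" by auto
      hence "a \<in> {1..n}" "b \<in> {1..n}" "t = Tsym n a b" using xs ks by (auto dest: set_zip_leftD set_zip_rightD)
      thus "t \<in> {1..n^2}" using Tsym_in by blast
    qed
    moreover have "length (map2 (Tsym n) xs ks) = l" using xs ks by simp
    ultimately show "\<exists>xs. length xs = l \<and> set xs \<subseteq> {1..n^2} \<and>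
        foldr (\<lambda>i f. ind_sigma n \<sigma> i \<circ> f) xs id 1 = s" by blast
  qed
qed

lemma part_pres:
  assumes sol: "nd_inv_solution X \<sigma> \<gamma>" and YZ: "Y \<inter> Z = {}" "Y \<union> Z = X"
    "nd_invariant_subset X \<sigma> \<gamma> Y" "nd_invariant_subset X \<sigma> \<gamma> Z"
    and x: "x \<in> X" and y: "y \<in> Y"
  shows "\<sigma> x y \<in> Y"
proof (cases "x \<in> Y")
  case True
  then show ?thesis using YZ(3) y unfolding nd_invariant_subset_def invariant_subset_def rmap_def by auto
next
  case False
  hence xZ: "x \<in> Z" using x YZ by auto
  have isX: "is_solution X \<sigma> \<gamma>" and ndX: "nondegenerate X \<sigma> \<gamma>" and ivX: "involutive X \<sigma> \<gamma>"
    using sol by (auto simp: nd_inv_solution_def)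
  have yX: "y \<in> X" using y YZ by auto
  have bX: "\<gamma> y x \<in> X" using sol_closed[OF isX x yX] by simp
  have aX: "\<sigma> x y \<in> X" using sol_closed[OF isX x yX] by simp
  have bZ: "\<gamma> y x \<in> Z"
  proof (rule ccontr)
    assume "\<gamma> y x \<notin> Z"
    hence "\<gamma> y x \<in> Y" using bX YZ by auto
    moreover have "bij_betw (\<gamma> y) Y Y" using YZ(3) y
      unfolding nd_invariant_subset_def nd_inv_solution_def nondegenerate_def by blast
    ultimately obtain y' where y': "y' \<in> Y" "\<gamma> y y' = \<gamma> y x" unfolding bij_betw_def by (metis imageE)
    have "inj_on (\<gamma> y) X" using ndX yX unfolding nondegenerate_def bij_betw_def by blast
    moreover have "y' \<in> X" using y' YZ by auto
    ultimately have "y' = x" using y' x by (auto dest: inj_onD)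
    thus False using y' False by simp
  qed
  show ?thesis
  proof (rule ccontr)
    assume "\<sigma> x y \<notin> Y"
    hence aZ: "\<sigma> x y \<in> Z" using aX YZ by auto
    have "rmap \<sigma> \<gamma> (\<sigma> x y, \<gamma> y x) \<in> Z \<times> Z"
      using YZ(4) aZ bZ unfolding nd_invariant_subset_def invariant_subset_def by blast
    moreover have "rmap \<sigma> \<gamma> (\<sigma> x y, \<gamma> y x) = (x, y)"
      using inv_comp[OF ivX x yX] by (simp add: rmap_def)
    ultimately have "y \<in> Z" by simp
    thus False using y YZ by auto
  qed
qed

lemma foldr_stay:
  "set xs \<subseteq> X \<Longrightarrow> x0 \<in> W \<Longrightarrow> (\<forall>x\<in>X. \<forall>y\<in>W. \<sigma> x y \<in> W) \<Longrightarrow> foldr (\<lambda>i f. \<sigma> i \<circ> f) xs id x0 \<in> W"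
  by (induction "xs") auto

lemma condC_indec:
  assumes sol: "nd_inv_solution X \<sigma> \<gamma>" and c: "condC X \<sigma> x0" and x0: "X = {} \<or> x0 \<in> X"
  shows "indecomposable X \<sigma> \<gamma>"
  unfolding indecomposable_def decomposable_def
proof
  assume "\<exists>Y Z. Y \<noteq> {} \<and> Z \<noteq> {} \<and> Y \<inter> Z = {} \<and> Y \<union> Z = X \<and>
      nd_invariant_subset X \<sigma> \<gamma> Y \<and> nd_invariant_subset X \<sigma> \<gamma> Z"
  then obtain Y Z where YZ: "Y \<noteq> {}" "Z \<noteq> {}" "Y \<inter> Z = {}" "Y \<union> Z = X"
      "nd_invariant_subset X \<sigma> \<gamma> Y" "nd_invariant_subset X \<sigma> \<gamma> Z" by blast
  have x0X: "x0 \<in> X" using x0 YZ by auto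
  obtain l where l: "\<forall>s\<in>X. \<exists>xs. length xs = l \<and> set xs \<subseteq> X \<and> foldr (\<lambda>i f. \<sigma> i \<circ> f) xs id x0 = s"
    using c unfolding condC_def by blast
  have pY: "\<forall>x\<in>X. \<forall>y\<in>Y. \<sigma> x y \<in> Y" using part_pres[OF sol YZ(3,4,5,6)] by blast
  have pZ: "\<forall>x\<in>X. \<forall>y\<in>Z. \<sigma> x y \<in> Z"
    using part_pres[OF sol _ _ YZ(6,5)] YZ(3,4) by (metis inf_commute sup_commute)
  show False
  proof (cases "x0 \<in> Y")
    case True
    obtain z where z: "z \<in> Z" using YZ(2) by blast
    hence "z \<in> X" using YZ by auto
    then obtain xs where "set xs \<subseteq> X" "foldr (\<lambda>i f. \<sigma> i \<circ> f) xs id x0 = z" using l by blast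
    hence "z \<in> Y" using foldr_stay[OF _ True pY] by metis
    thus False using z YZ(3) by blast
  next
    case False
    hence x0Z: "x0 \<in> Z" using x0X YZ by auto
    obtain z where z: "z \<in> Y" using YZ(1) by blast
    hence "z \<in> X" using YZ by auto
    then obtain xs where "set xs \<subseteq> X" "foldr (\<lambda>i f. \<sigma> i \<circ> f) xs id x0 = z" using l by blast
    hence "z \<in> Z" using foldr_stay[OF _ x0Z pZ] by metis
    thus False using z YZ(3) by blast
  qed
qed

lemma iter:
  assumes sol: "nd_inv_solution {1..n} \<sigma> \<gamma>"
  shows "case (induced ^^ k) (n, \<sigma>, \<gamma>) of (N, s, t) \<Rightarrow>
     N = n ^ (2 ^ k) \<and> nd_inv_solution {1..N} s t \<and> (condC {1..n} \<sigma> 1 \<longrightarrow> condC {1..N} s 1)"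
proof (induction k)
  case 0
  then show ?case using sol by simp
next
  case (Suc k)
  obtain N s t where e: "(induced ^^ k) (n, \<sigma>, \<gamma>) = (N, s, t)" by (metis prod_cases3)
  have h: "N = n ^ (2 ^ k)" "nd_inv_solution {1..N} s t" "condC {1..n} \<sigma> 1 \<longrightarrow> condC {1..N} s 1"
    using Suc.IH e by auto
  have "(induced ^^ Suc k) (n, \<sigma>, \<gamma>) = (N^2, ind_sigma N s, ind_gamma N t)"
    using e by (simp add: induced_def)
  moreover have "N^2 = n ^ (2 ^ Suc k)" using h(1) by (simp add: power_mult[symmetric] mult.commute)
  ultimately show ?case using h induced_sol[OF h(2)] condC_T[OF h(2)] by simp
qed


definition eqv :: "'a set \<Rightarrow> ('a \<Rightarrow> 'a \<Rightarrow> 'a) \<Rightarrow> 'a \<Rightarrow> 'a \<Rightarrow> bool" where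
  "eqv X \<sigma> x y \<longleftrightarrow> (\<forall>z\<in>X. \<sigma> x z = \<sigma> y z)"

definition cs :: "'a set \<Rightarrow> ('a \<Rightarrow> 'a \<Rightarrow> 'a) \<Rightarrow> bool" where
  "cs X \<sigma> \<longleftrightarrow> finite X \<and> (\<forall>x\<in>X. \<forall>y\<in>X. \<sigma> x y \<in> X) \<and> (\<forall>x\<in>X. inj_on (\<sigma> x) X) \<and>
     (\<forall>x\<in>X. \<forall>y\<in>X. \<forall>w\<in>X. \<sigma> (\<sigma> x y) w = x \<longrightarrow> (\<forall>z\<in>X. \<sigma> x (\<sigma> y z) = \<sigma> (\<sigma> x y) (\<sigma> w z)))"

definition RetS :: "'a set \<times> ('a \<Rightarrow> 'a \<Rightarrow> 'a) \<Rightarrow> 'a set \<times> ('a \<Rightarrow> 'a \<Rightarrow> 'a)" where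
  "RetS S = (ret_rep (fst S) (snd S) ` fst S, \<lambda>x y. ret_rep (fst S) (snd S) (snd S x y))"

lemma eqv_refl: "eqv X \<sigma> x x" by (simp add: eqv_def)
lemma eqv_sym: "eqv X \<sigma> x y \<Longrightarrow> eqv X \<sigma> y x" by (simp add: eqv_def)
lemma eqv_trans: "eqv X \<sigma> x y \<Longrightarrow> eqv X \<sigma> y z \<Longrightarrow> eqv X \<sigma> x z" by (simp add: eqv_def)

lemma rep_in: "x \<in> X \<Longrightarrow> ret_rep X \<sigma> x \<in> X \<and> eqv X \<sigma> (ret_rep X \<sigma> x) x"
  unfolding ret_rep_def eqv_def by (rule someI_ex) blast

lemma rep_eq: "eqv X \<sigma> x y \<Longrightarrow> ret_rep X \<sigma> x = ret_rep X \<sigma> y"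
  unfolding ret_rep_def eqv_def by metis

lemma rep_eq_iff: "x \<in> X \<Longrightarrow> y \<in> X \<Longrightarrow> ret_rep X \<sigma> x = ret_rep X \<sigma> y \<longleftrightarrow> eqv X \<sigma> x y"
  by (metis rep_eq rep_in eqv_sym eqv_trans)

lemma rep_rep: "x \<in> X \<Longrightarrow> ret_rep X \<sigma> (ret_rep X \<sigma> x) = ret_rep X \<sigma> x"
  by (meson rep_eq rep_in)

lemma rep_fun: "x \<in> X \<Longrightarrow> z \<in> X \<Longrightarrow> \<sigma> (ret_rep X \<sigma> x) z = \<sigma> x z"
  using rep_in unfolding eqv_def by metis

lemma cs_closed: "cs X \<sigma> \<Longrightarrow> x \<in> X \<Longrightarrow> y \<in> X \<Longrightarrow> \<sigma> x y \<in> X"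
  unfolding cs_def by blast

lemma cs_inj: "cs X \<sigma> \<Longrightarrow> x \<in> X \<Longrightarrow> inj_on (\<sigma> x) X"
  unfolding cs_def by blast

lemma cs_surj: "cs X \<sigma> \<Longrightarrow> x \<in> X \<Longrightarrow> \<sigma> x ` X = X"
  by (rule endo_inj_surj) (auto simp: cs_def)

lemma cs_L: "cs X \<sigma> \<Longrightarrow> x \<in> X \<Longrightarrow> y \<in> X \<Longrightarrow> w \<in> X \<Longrightarrow> \<sigma> (\<sigma> x y) w = x \<Longrightarrow> z \<in> X \<Longrightarrow>
   \<sigma> x (\<sigma> y z) = \<sigma> (\<sigma> x y) (\<sigma> w z)"
  unfolding cs_def by blast

lemma cs_reflect:
  assumes c: "cs X \<sigma>" and xy: "x \<in> X" "y \<in> X" "y' \<in> X" and e: "eqv X \<sigma> (\<sigma> x y) (\<sigma> x y')"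
  shows "eqv X \<sigma> y y'"
proof -
  define v where "v = \<sigma> x y"
  define v' where "v' = \<sigma> x y'"
  have vX: "v \<in> X" "v' \<in> X" using cs_closed[OF c] xy unfolding v_def v'_def by auto
  obtain w where w: "w \<in> X" "\<sigma> v w = x" using cs_surj[OF c vX(1)] xy by (metis imageE)
  obtain w' where w': "w' \<in> X" "\<sigma> v' w' = x" using cs_surj[OF c vX(2)] xy by (metis imageE)
  have "\<sigma> v w' = \<sigma> v' w'" using e w' unfolding eqv_def v_def v'_def by blast
  hence "\<sigma> v w' = \<sigma> v w" using w w' by simp
  hence ww: "w' = w" using cs_inj[OF c vX(1)] w w' by (auto dest: inj_onD)
  show ?thesis unfolding eqv_def
  proof
    fix z assume z: "z \<in> X"
    have "\<sigma> x (\<sigma> y z) = \<sigma> v (\<sigma> w z)" using cs_L[OF c xy(1,2) w(1) _ z] w unfolding v_def by simp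
    moreover have "\<sigma> x (\<sigma> y' z) = \<sigma> v' (\<sigma> w' z)" using cs_L[OF c xy(1,3) w'(1) _ z] w' unfolding v'_def by simp
    moreover have "\<sigma> v' (\<sigma> w' z) = \<sigma> v (\<sigma> w z)" using e ww cs_closed[OF c w(1) z] unfolding eqv_def v_def v'_def by simp
    ultimately have "\<sigma> x (\<sigma> y z) = \<sigma> x (\<sigma> y' z)" by simp
    thus "\<sigma> y z = \<sigma> y' z" using cs_inj[OF c xy(1)] cs_closed[OF c] xy z by (auto dest: inj_onD)
  qed
qed

lemma cs_cong:
  assumes c: "cs X \<sigma>" and xy: "x \<in> X" "y \<in> X" "y' \<in> X" and e: "eqv X \<sigma> y y'"
  shows "eqv X \<sigma> (\<sigma> x y) (\<sigma> x y')"
proof -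
  define \<Phi> where "\<Phi> = \<sigma> x"
  define \<Phi>i where "\<Phi>i = inv_into X \<Phi>"
  have bij: "bij_betw \<Phi> X X" unfolding \<Phi>_def bij_betw_def using cs_inj[OF c xy(1)] cs_surj[OF c xy(1)] by simp
  have \<Phi>X: "\<And>u. u \<in> X \<Longrightarrow> \<Phi> u \<in> X" using bij by (auto simp: bij_betw_def)
  have i1: "\<And>v. v \<in> X \<Longrightarrow> \<Phi>i v \<in> X \<and> \<Phi> (\<Phi>i v) = v" unfolding \<Phi>i_def
    using bij by (metis bij_betw_def f_inv_into_f inv_into_into)
  have i2: "\<And>u. u \<in> X \<Longrightarrow> \<Phi>i (\<Phi> u) = u" unfolding \<Phi>i_def
    using bij by (metis bij_betw_def inv_into_f_f)
  have refl_inv: "\<And>u u'. u \<in> X \<Longrightarrow> u' \<in> X \<Longrightarrow> eqv X \<sigma> u u' \<Longrightarrow> eqv X \<sigma> (\<Phi>i u) (\<Phi>i u')"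
  proof -
    fix u u' assume u: "u \<in> X" "u' \<in> X" "eqv X \<sigma> u u'"
    show "eqv X \<sigma> (\<Phi>i u) (\<Phi>i u')"
      apply (rule cs_reflect[OF c xy(1)])
      using i1 u unfolding \<Phi>_def by auto
  qed
  define cls where "cls v = {z \<in> X. eqv X \<sigma> z v}" for v
  have cls_eq: "\<And>a b. a \<in> X \<Longrightarrow> b \<in> X \<Longrightarrow> cls a = cls b \<longleftrightarrow> eqv X \<sigma> a b"
  proof -
    fix a b assume ab: "a \<in> X" "b \<in> X"
    show "cls a = cls b \<longleftrightarrow> eqv X \<sigma> a b"
    proof
      assume "cls a = cls b"
      moreover have "a \<in> cls a" using ab unfolding cls_def by (simp add: eqv_refl)
      ultimately show "eqv X \<sigma> a b" unfolding cls_def by blast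
    next
      assume "eqv X \<sigma> a b"
      thus "cls a = cls b" unfolding cls_def by (blast intro: eqv_trans eqv_sym)
    qed
  qed
  define Q where "Q = cls ` X"
  have fQ: "finite Q" using c unfolding Q_def cs_def by simp
  define \<psi> where "\<psi> D = cls (\<Phi>i (SOME v. v \<in> D))" for D
  have \<psi>cls: "\<And>v. v \<in> X \<Longrightarrow> \<psi> (cls v) = cls (\<Phi>i v)"
  proof -
    fix v assume v: "v \<in> X"
    have "v \<in> cls v" using v unfolding cls_def by (simp add: eqv_refl)
    hence "(SOME u. u \<in> cls v) \<in> cls v" by (rule someI)
    hence s: "(SOME u. u \<in> cls v) \<in> X" "eqv X \<sigma> (SOME u. u \<in> cls v) v" unfolding cls_def by auto
    have "eqv X \<sigma> (\<Phi>i (SOME u. u \<in> cls v)) (\<Phi>i v)" using refl_inv[OF s(1) v s(2)] .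
    thus "\<psi> (cls v) = cls (\<Phi>i v)" unfolding \<psi>_def using cls_eq i1 s(1) v by blast
  qed
  have img: "\<psi> ` Q = Q"
  proof
    show "\<psi> ` Q \<subseteq> Q" unfolding Q_def using \<psi>cls i1 by auto
    show "Q \<subseteq> \<psi> ` Q"
    proof
      fix D assume "D \<in> Q"
      then obtain c' where c': "c' \<in> X" "D = cls c'" unfolding Q_def by blast
      have "\<psi> (cls (\<Phi> c')) = D" using \<psi>cls[OF \<Phi>X[OF c'(1)]] i2[OF c'(1)] c' by simp
      moreover have "cls (\<Phi> c') \<in> Q" unfolding Q_def using \<Phi>X[OF c'(1)] by blast
      ultimately show "D \<in> \<psi> ` Q" by blast
    qed
  qed
  have inj: "inj_on \<psi> Q" by (rule eq_card_imp_inj_on[OF fQ]) (simp add: img)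
  have "\<psi> (cls (\<Phi> y)) = cls y" using \<psi>cls[OF \<Phi>X[OF xy(2)]] i2[OF xy(2)] by simp
  moreover have "\<psi> (cls (\<Phi> y')) = cls y'" using \<psi>cls[OF \<Phi>X[OF xy(3)]] i2[OF xy(3)] by simp
  moreover have "cls y = cls y'" using cls_eq xy e by blast
  ultimately have "cls (\<Phi> y) = cls (\<Phi> y')"
    using inj unfolding Q_def by (metis \<Phi>X xy(2,3) image_eqI inj_onD)
  thus ?thesis using cls_eq \<Phi>X xy unfolding \<Phi>_def by blast
qed


lemma cs_Ret:
  assumes c: "cs (fst S) (snd S)"
  shows "cs (fst (RetS S)) (snd (RetS S))"
proof -
  obtain X \<sigma> where S: "S = (X, \<sigma>)" by (cases S)
  have c: "cs X \<sigma>" using c S by simp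
  define rep where "rep = ret_rep X \<sigma>"
  define X1 where "X1 = rep ` X"
  define \<sigma>1 where "\<sigma>1 = (\<lambda>x y. rep (\<sigma> x y))"
  have R: "RetS S = (X1, \<sigma>1)" unfolding RetS_def S X1_def \<sigma>1_def rep_def by simp
  have X1X: "\<And>a. a \<in> X1 \<Longrightarrow> a \<in> X \<and> rep a = a"
  proof -
    fix a assume "a \<in> X1"
    then obtain x where x: "x \<in> X" "a = rep x" unfolding X1_def by blast
    show "a \<in> X \<and> rep a = a" using rep_in[OF x(1), of \<sigma>] rep_rep[OF x(1), of \<sigma>] x(2) unfolding rep_def by simp
  qed
  have repX: "\<And>a. a \<in> X \<Longrightarrow> rep a \<in> X1" unfolding X1_def by blast
  have repe: "\<And>a. a \<in> X \<Longrightarrow> eqv X \<sigma> (rep a) a" unfolding rep_def by (simp add: rep_in)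
  have repiff: "\<And>a b. a \<in> X \<Longrightarrow> b \<in> X \<Longrightarrow> rep a = rep b \<longleftrightarrow> eqv X \<sigma> a b"
    unfolding rep_def by (simp add: rep_eq_iff)
  have repf: "\<And>a z. a \<in> X \<Longrightarrow> z \<in> X \<Longrightarrow> \<sigma> (rep a) z = \<sigma> a z" unfolding rep_def by (simp add: rep_fun)
  have cl: "\<And>a b. a \<in> X \<Longrightarrow> b \<in> X \<Longrightarrow> \<sigma> a b \<in> X" using cs_closed[OF c] by blast
  have congr: "\<And>a b. a \<in> X \<Longrightarrow> b \<in> X \<Longrightarrow> rep (\<sigma> a (rep b)) = rep (\<sigma> a b)"
  proof -
    fix a b assume ab: "a \<in> X" "b \<in> X"
    have rb: "rep b \<in> X" using X1X repX ab by blast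
    have e: "eqv X \<sigma> (\<sigma> a (rep b)) (\<sigma> a b)" using cs_cong[OF c ab(1) rb ab(2) repe[OF ab(2)]] .
    show "rep (\<sigma> a (rep b)) = rep (\<sigma> a b)"
      using repiff[OF cl[OF ab(1) rb] cl[OF ab]] e by simp
  qed
  have "finite X1" using c unfolding X1_def cs_def by simp
  moreover have "\<forall>x\<in>X1. \<forall>y\<in>X1. \<sigma>1 x y \<in> X1" unfolding \<sigma>1_def
  proof (intro ballI)
    fix x y assume "x \<in> X1" "y \<in> X1"
    thus "rep (\<sigma> x y) \<in> X1" using X1X repX cl by simp
  qed
  moreover have "\<forall>x\<in>X1. inj_on (\<sigma>1 x) X1"
  proof (intro ballI inj_onI)
    fix a b b' assume a: "a \<in> X1" "b \<in> X1" "b' \<in> X1" "\<sigma>1 a b = \<sigma>1 a b'"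
    hence "eqv X \<sigma> (\<sigma> a b) (\<sigma> a b')" unfolding \<sigma>1_def using repiff cl X1X by blast
    hence "eqv X \<sigma> b b'" using cs_reflect[OF c] X1X a by blast
    thus "b = b'" using repiff X1X a by metis
  qed
  moreover have "\<forall>x\<in>X1. \<forall>y\<in>X1. \<forall>w\<in>X1. \<sigma>1 (\<sigma>1 x y) w = x \<longrightarrow> (\<forall>z\<in>X1. \<sigma>1 x (\<sigma>1 y z) = \<sigma>1 (\<sigma>1 x y) (\<sigma>1 w z))"
  proof (intro ballI impI)
    fix x y w z assume a: "x \<in> X1" "y \<in> X1" "w \<in> X1" "\<sigma>1 (\<sigma>1 x y) w = x" "z \<in> X1"
    have xX: "x \<in> X" "y \<in> X" "w \<in> X" "z \<in> X" "rep x = x" using X1X a by auto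
    define v where "v = \<sigma> x y"
    have vX: "v \<in> X" unfolding v_def using cl xX by blast
    have "rep (\<sigma> v w) = x" using a(4) repf[OF vX xX(3)] unfolding \<sigma>1_def v_def by simp
    hence "rep (\<sigma> v w) = rep x" using xX by simp
    hence e1: "eqv X \<sigma> (\<sigma> v w) x" using repiff[OF cl[OF vX xX(3)] xX(1)] by simp
    obtain w' where w': "w' \<in> X" "\<sigma> v w' = x" using cs_surj[OF c vX] xX by (metis imageE)
    have "eqv X \<sigma> (\<sigma> v w) (\<sigma> v w')" using e1 w' by simp
    hence ww: "eqv X \<sigma> w w'" using cs_reflect[OF c vX xX(3) w'(1)] by blast
    have L: "\<sigma> x (\<sigma> y z) = \<sigma> v (\<sigma> w' z)" using cs_L[OF c xX(1,2) w'(1) _ xX(4)] w' unfolding v_def by simp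
    have f1: "\<sigma>1 x (\<sigma>1 y z) = rep (\<sigma> x (\<sigma> y z))" unfolding \<sigma>1_def using congr[OF xX(1) cl[OF xX(2) xX(4)]] .
    have f2: "\<sigma>1 (\<sigma>1 x y) (\<sigma>1 w z) = rep (\<sigma> v (\<sigma> w z))"
    proof -
      have wz: "\<sigma> w z \<in> X" using cl xX by blast
      have rwz: "rep (\<sigma> w z) \<in> X" using X1X repX wz by blast
      have "\<sigma>1 (\<sigma>1 x y) (\<sigma>1 w z) = rep (\<sigma> (rep v) (rep (\<sigma> w z)))" unfolding \<sigma>1_def v_def ..
      also have "\<dots> = rep (\<sigma> v (rep (\<sigma> w z)))" using repf[OF vX rwz] by simp
      also have "\<dots> = rep (\<sigma> v (\<sigma> w z))" using congr[OF vX wz] .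
      finally show ?thesis .
    qed
    have f3: "\<sigma> w z = \<sigma> w' z" using ww xX(4) unfolding eqv_def by blast
    show "\<sigma>1 x (\<sigma>1 y z) = \<sigma>1 (\<sigma>1 x y) (\<sigma>1 w z)" unfolding f1 f2 L f3 ..
  qed
  ultimately show ?thesis unfolding R fst_conv snd_conv cs_def by blast
qed

definition iso :: "'a set \<Rightarrow> ('a \<Rightarrow> 'a \<Rightarrow> 'a) \<Rightarrow> 'b set \<Rightarrow> ('b \<Rightarrow> 'b \<Rightarrow> 'b) \<Rightarrow> bool" where
  "iso A \<alpha> B \<beta> \<longleftrightarrow> (\<exists>h. bij_betw h A B \<and> (\<forall>x\<in>A. \<forall>y\<in>A. h (\<alpha> x y) = \<beta> (h x) (h y)))"

lemma iso_card: "iso A \<alpha> B \<beta> \<Longrightarrow> card A = card B"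
  unfolding iso_def using bij_betw_same_card by blast

lemma iso_trans:
  assumes "iso A \<alpha> B \<beta>" "iso B \<beta> C \<gamma>" and cA: "\<forall>x\<in>A. \<forall>y\<in>A. \<alpha> x y \<in> A"
  shows "iso A \<alpha> C \<gamma>"
proof -
  obtain h where h: "bij_betw h A B" "\<forall>x\<in>A. \<forall>y\<in>A. h (\<alpha> x y) = \<beta> (h x) (h y)" using assms(1) unfolding iso_def by blast
  obtain k where k: "bij_betw k B C" "\<forall>x\<in>B. \<forall>y\<in>B. k (\<beta> x y) = \<gamma> (k x) (k y)" using assms(2) unfolding iso_def by blast
  have "bij_betw (k \<circ> h) A C" using h k bij_betw_trans by blast
  moreover have "\<forall>x\<in>A. \<forall>y\<in>A. (k \<circ> h) (\<alpha> x y) = \<gamma> ((k \<circ> h) x) ((k \<circ> h) y)"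
  proof (intro ballI)
    fix x y assume xy: "x \<in> A" "y \<in> A"
    have "h x \<in> B" "h y \<in> B" using h(1) xy by (auto simp: bij_betw_def)
    thus "(k \<circ> h) (\<alpha> x y) = \<gamma> ((k \<circ> h) x) ((k \<circ> h) y)" using h(2) k(2) xy by simp
  qed
  ultimately show ?thesis unfolding iso_def by blast
qed

lemma iso_Ret:
  assumes cA: "cs (fst S) (snd S)" and cB: "cs (fst T) (snd T)" and i: "iso (fst S) (snd S) (fst T) (snd T)"
  shows "iso (fst (RetS S)) (snd (RetS S)) (fst (RetS T)) (snd (RetS T))"
proof -
  obtain A \<alpha> where S: "S = (A, \<alpha>)" by (cases S)
  obtain B \<beta> where T: "T = (B, \<beta>)" by (cases T)
  have cA: "cs A \<alpha>" and cB: "cs B \<beta>" using cA cB S T by auto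
  obtain h where h: "bij_betw h A B" "\<forall>x\<in>A. \<forall>y\<in>A. h (\<alpha> x y) = \<beta> (h x) (h y)" using i S T unfolding iso_def by auto
  have hB: "\<And>x. x \<in> A \<Longrightarrow> h x \<in> B" using h by (auto simp: bij_betw_def)
  have ev: "\<And>x y. x \<in> A \<Longrightarrow> y \<in> A \<Longrightarrow> eqv A \<alpha> x y \<longleftrightarrow> eqv B \<beta> (h x) (h y)"
  proof -
    fix x y assume xy: "x \<in> A" "y \<in> A"
    have "eqv B \<beta> (h x) (h y) \<longleftrightarrow> (\<forall>z\<in>A. \<beta> (h x) (h z) = \<beta> (h y) (h z))"
      unfolding eqv_def using h(1) by (auto simp: bij_betw_def)
    also have "\<dots> \<longleftrightarrow> (\<forall>z\<in>A. h (\<alpha> x z) = h (\<alpha> y z))" using h(2) xy by simp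
    also have "\<dots> \<longleftrightarrow> (\<forall>z\<in>A. \<alpha> x z = \<alpha> y z)"
      using h(1) cs_closed[OF cA] xy unfolding bij_betw_def by (auto dest: inj_onD)
    finally show "eqv A \<alpha> x y \<longleftrightarrow> eqv B \<beta> (h x) (h y)" unfolding eqv_def by simp
  qed
  define rA where "rA = ret_rep A \<alpha>"
  define rB where "rB = ret_rep B \<beta>"
  have RS: "RetS S = (rA ` A, \<lambda>x y. rA (\<alpha> x y))" unfolding RetS_def S rA_def by simp
  have RT: "RetS T = (rB ` B, \<lambda>x y. rB (\<beta> x y))" unfolding RetS_def T rB_def by simp
  have rAi: "\<And>a. a \<in> A \<Longrightarrow> rA a \<in> A \<and> eqv A \<alpha> (rA a) a \<and> rA (rA a) = rA a" unfolding rA_def by (simp add: rep_in rep_rep)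
  have rBi: "\<And>a. a \<in> B \<Longrightarrow> rB a \<in> B \<and> eqv B \<beta> (rB a) a \<and> rB (rB a) = rB a" unfolding rB_def by (simp add: rep_in rep_rep)
  have rAe: "\<And>a b. a \<in> A \<Longrightarrow> b \<in> A \<Longrightarrow> rA a = rA b \<longleftrightarrow> eqv A \<alpha> a b" unfolding rA_def by (simp add: rep_eq_iff)
  have rBe: "\<And>a b. a \<in> B \<Longrightarrow> b \<in> B \<Longrightarrow> rB a = rB b \<longleftrightarrow> eqv B \<beta> a b" unfolding rB_def by (simp add: rep_eq_iff)
  have rBf: "\<And>a z. a \<in> B \<Longrightarrow> z \<in> B \<Longrightarrow> \<beta> (rB a) z = \<beta> a z" unfolding rB_def by (simp add: rep_fun)
  define h' where "h' = rB \<circ> h"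
  have "bij_betw h' (rA ` A) (rB ` B)"
    unfolding bij_betw_def
  proof
    show "inj_on h' (rA ` A)"
    proof (rule inj_onI)
      fix a b assume ab: "a \<in> rA ` A" "b \<in> rA ` A" "h' a = h' b"
      have aA: "a \<in> A" "rA a = a" "b \<in> A" "rA b = b" using ab(1,2) rAi by auto
      have "eqv B \<beta> (h a) (h b)" using ab(3) rBe hB aA unfolding h'_def by simp
      hence "eqv A \<alpha> a b" using ev aA by blast
      thus "a = b" using rAe aA by metis
    qed
    show "h' ` rA ` A = rB ` B"
    proof
      show "h' ` rA ` A \<subseteq> rB ` B" unfolding h'_def using rAi hB by auto
      show "rB ` B \<subseteq> h' ` rA ` A"
      proof
        fix y assume "y \<in> rB ` B"
        then obtain b where b: "b \<in> B" "y = rB b" by blast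
        then obtain a where a: "a \<in> A" "b = h a" using h(1) unfolding bij_betw_def by blast
        have "eqv B \<beta> (h (rA a)) (h a)" using ev rAi a by blast
        hence "h' (rA a) = y" unfolding h'_def using rBe hB rAi a b by simp
        thus "y \<in> h' ` rA ` A" using a by blast
      qed
    qed
  qed
  moreover have "\<forall>x\<in>rA ` A. \<forall>y\<in>rA ` A. h' (rA (\<alpha> x y)) = rB (\<beta> (h' x) (h' y))"
  proof (intro ballI)
    fix x y assume xy: "x \<in> rA ` A" "y \<in> rA ` A"
    have xA: "x \<in> A" "y \<in> A" using xy rAi by auto
    have axy: "\<alpha> x y \<in> A" using cs_closed[OF cA] xA by blast
    have "h' (rA (\<alpha> x y)) = rB (h (\<alpha> x y))"
      unfolding h'_def using ev[OF rAi[OF axy, THEN conjunct1] axy] rAi[OF axy] rBe hB axy rAi by simp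
    also have "\<dots> = rB (\<beta> (h x) (h y))" using h(2) xA by simp
    also have "\<dots> = rB (\<beta> (h x) (rB (h y)))"
    proof -
      have "eqv B \<beta> (\<beta> (h x) (rB (h y))) (\<beta> (h x) (h y))"
        using cs_cong[OF cB] hB xA rBi by blast
      thus ?thesis using rBe cs_closed[OF cB] hB xA rBi by metis
    qed
    also have "\<dots> = rB (\<beta> (h' x) (h' y))" unfolding h'_def using rBf hB xA rBi by simp
    finally show "h' (rA (\<alpha> x y)) = rB (\<beta> (h' x) (h' y))" .
  qed
  ultimately show ?thesis unfolding iso_def RS RT by auto
qed

definition prodop :: "('a \<Rightarrow> 'a \<Rightarrow> 'a) \<Rightarrow> ('b \<Rightarrow> 'b \<Rightarrow> 'b) \<Rightarrow> 'a \<times> 'b \<Rightarrow> 'a \<times> 'b \<Rightarrow> 'a \<times> 'b" where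
  "prodop \<alpha> \<beta> p q = (\<alpha> (fst p) (fst q), \<beta> (snd p) (snd q))"

lemma cs_prod:
  assumes cA: "cs A \<alpha>" and cB: "cs B \<beta>"
  shows "cs (A \<times> B) (prodop \<alpha> \<beta>)"
  unfolding cs_def
proof (intro conjI ballI impI)
  show "finite (A \<times> B)" using cA cB by (simp add: cs_def)
next
  fix x y assume "x \<in> A \<times> B" "y \<in> A \<times> B"
  thus "prodop \<alpha> \<beta> x y \<in> A \<times> B" using cs_closed[OF cA] cs_closed[OF cB] by (auto simp: prodop_def)
next
  fix x assume x: "x \<in> A \<times> B"
  show "inj_on (prodop \<alpha> \<beta> x) (A \<times> B)"
  proof (rule inj_onI)
    fix p q assume "p \<in> A \<times> B" "q \<in> A \<times> B" "prodop \<alpha> \<beta> x p = prodop \<alpha> \<beta> x q"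
    thus "p = q" using x cs_inj[OF cA, of "fst x"] cs_inj[OF cB, of "snd x"]
      by (auto simp: prodop_def dest: inj_onD intro: prod_eqI)
  qed
next
  fix x y w z assume a: "x \<in> A \<times> B" "y \<in> A \<times> B" "w \<in> A \<times> B" "prodop \<alpha> \<beta> (prodop \<alpha> \<beta> x y) w = x" "z \<in> A \<times> B"
  have "\<alpha> (fst x) (\<alpha> (fst y) (fst z)) = \<alpha> (\<alpha> (fst x) (fst y)) (\<alpha> (fst w) (fst z))"
    using a by (intro cs_L[OF cA]) (auto simp: prodop_def)
  moreover have "\<beta> (snd x) (\<beta> (snd y) (snd z)) = \<beta> (\<beta> (snd x) (snd y)) (\<beta> (snd w) (snd z))"
    using a by (intro cs_L[OF cB]) (auto simp: prodop_def)
  ultimately show "prodop \<alpha> \<beta> x (prodop \<alpha> \<beta> y z) = prodop \<alpha> \<beta> (prodop \<alpha> \<beta> x y) (prodop \<alpha> \<beta> w z)"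
    by (simp add: prodop_def)
qed


lemma rep_cong2:
  assumes c: "cs X \<sigma>" and ab: "a \<in> X" "b \<in> X"
  shows "ret_rep X \<sigma> (\<sigma> (ret_rep X \<sigma> a) (ret_rep X \<sigma> b)) = ret_rep X \<sigma> (\<sigma> a b)"
proof -
  have rb: "ret_rep X \<sigma> b \<in> X" "eqv X \<sigma> (ret_rep X \<sigma> b) b" using rep_in[OF ab(2)] by auto
  have "\<sigma> (ret_rep X \<sigma> a) (ret_rep X \<sigma> b) = \<sigma> a (ret_rep X \<sigma> b)" using rep_fun[OF ab(1) rb(1)] .
  moreover have "eqv X \<sigma> (\<sigma> a (ret_rep X \<sigma> b)) (\<sigma> a b)" using cs_cong[OF c ab(1) rb(1) ab(2) rb(2)] .
  ultimately show ?thesis using rep_eq by metis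
qed

lemma Ret_prod:
  assumes cA: "cs A \<alpha>" and cB: "cs B \<beta>"
  shows "iso (fst (RetS (A \<times> B, prodop \<alpha> \<beta>))) (snd (RetS (A \<times> B, prodop \<alpha> \<beta>)))
             (fst (RetS (A, \<alpha>)) \<times> fst (RetS (B, \<beta>))) (prodop (snd (RetS (A, \<alpha>))) (snd (RetS (B, \<beta>))))"
proof (cases "A = {} \<or> B = {}")
  case True
  then show ?thesis unfolding iso_def RetS_def bij_betw_def by auto
next
  case False
  then obtain a0 b0 where ab0: "a0 \<in> A" "b0 \<in> B" by blast
  define rP where "rP = ret_rep (A \<times> B) (prodop \<alpha> \<beta>)"
  define rA where "rA = ret_rep A \<alpha>"
  define rB where "rB = ret_rep B \<beta>"
  have RP: "RetS (A \<times> B, prodop \<alpha> \<beta>) = (rP ` (A \<times> B), \<lambda>p q. rP (prodop \<alpha> \<beta> p q))" unfolding RetS_def rP_def by simp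
  have RA: "RetS (A, \<alpha>) = (rA ` A, \<lambda>x y. rA (\<alpha> x y))" unfolding RetS_def rA_def by simp
  have RB: "RetS (B, \<beta>) = (rB ` B, \<lambda>x y. rB (\<beta> x y))" unfolding RetS_def rB_def by simp
  have eqvP: "\<And>p q. p \<in> A \<times> B \<Longrightarrow> q \<in> A \<times> B \<Longrightarrow>
      eqv (A \<times> B) (prodop \<alpha> \<beta>) p q \<longleftrightarrow> eqv A \<alpha> (fst p) (fst q) \<and> eqv B \<beta> (snd p) (snd q)"
  proof -
    fix p q assume pq: "p \<in> A \<times> B" "q \<in> A \<times> B"
    show "eqv (A \<times> B) (prodop \<alpha> \<beta>) p q \<longleftrightarrow> eqv A \<alpha> (fst p) (fst q) \<and> eqv B \<beta> (snd p) (snd q)"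
    proof
      assume e: "eqv (A \<times> B) (prodop \<alpha> \<beta>) p q"
      have "eqv A \<alpha> (fst p) (fst q)" unfolding eqv_def
      proof
        fix z assume "z \<in> A"
        hence "prodop \<alpha> \<beta> p (z, b0) = prodop \<alpha> \<beta> q (z, b0)" using e ab0 unfolding eqv_def by blast
        thus "\<alpha> (fst p) z = \<alpha> (fst q) z" by (simp add: prodop_def)
      qed
      moreover have "eqv B \<beta> (snd p) (snd q)" unfolding eqv_def
      proof
        fix z assume "z \<in> B"
        hence "prodop \<alpha> \<beta> p (a0, z) = prodop \<alpha> \<beta> q (a0, z)" using e ab0 unfolding eqv_def by blast
        thus "\<beta> (snd p) z = \<beta> (snd q) z" by (simp add: prodop_def)
      qed
      ultimately show "eqv A \<alpha> (fst p) (fst q) \<and> eqv B \<beta> (snd p) (snd q)" ..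
    next
      assume "eqv A \<alpha> (fst p) (fst q) \<and> eqv B \<beta> (snd p) (snd q)"
      thus "eqv (A \<times> B) (prodop \<alpha> \<beta>) p q" unfolding eqv_def prodop_def by auto
    qed
  qed
  have rPi: "\<And>p. p \<in> A \<times> B \<Longrightarrow> rP p \<in> A \<times> B \<and> eqv (A \<times> B) (prodop \<alpha> \<beta>) (rP p) p \<and> rP (rP p) = rP p"
    unfolding rP_def by (simp add: rep_in rep_rep)
  have rPe: "\<And>p q. p \<in> A \<times> B \<Longrightarrow> q \<in> A \<times> B \<Longrightarrow> rP p = rP q \<longleftrightarrow> eqv (A \<times> B) (prodop \<alpha> \<beta>) p q"
    unfolding rP_def by (simp add: rep_eq_iff)
  have rAi: "\<And>a. a \<in> A \<Longrightarrow> rA a \<in> A" unfolding rA_def by (simp add: rep_in)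
  have rBi: "\<And>a. a \<in> B \<Longrightarrow> rB a \<in> B" unfolding rB_def by (simp add: rep_in)
  have rAe: "\<And>a b. a \<in> A \<Longrightarrow> b \<in> A \<Longrightarrow> rA a = rA b \<longleftrightarrow> eqv A \<alpha> a b" unfolding rA_def by (simp add: rep_eq_iff)
  have rBe: "\<And>a b. a \<in> B \<Longrightarrow> b \<in> B \<Longrightarrow> rB a = rB b \<longleftrightarrow> eqv B \<beta> a b" unfolding rB_def by (simp add: rep_eq_iff)
  have rPfst: "\<And>p. p \<in> A \<times> B \<Longrightarrow> rA (fst (rP p)) = rA (fst p) \<and> rB (snd (rP p)) = rB (snd p)"
  proof -
    fix p assume p: "p \<in> A \<times> B"
    have rp: "rP p \<in> A \<times> B" using rPi[OF p] by blast
    have "eqv A \<alpha> (fst (rP p)) (fst p) \<and> eqv B \<beta> (snd (rP p)) (snd p)" using eqvP[OF rp p] rPi[OF p] by blast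
    moreover have "fst (rP p) \<in> A" "snd (rP p) \<in> B" using rp by auto
    ultimately show "rA (fst (rP p)) = rA (fst p) \<and> rB (snd (rP p)) = rB (snd p)" using rAe rBe p by auto
  qed
  define h where "h p = (rA (fst p), rB (snd p))" for p
  have "bij_betw h (rP ` (A \<times> B)) (rA ` A \<times> rB ` B)"
    unfolding bij_betw_def
  proof
    show "inj_on h (rP ` (A \<times> B))"
    proof (rule inj_onI)
      fix p q assume pq: "p \<in> rP ` (A \<times> B)" "q \<in> rP ` (A \<times> B)" "h p = h q"
      have pA: "p \<in> A \<times> B" "rP p = p" "q \<in> A \<times> B" "rP q = q" using pq(1,2) rPi by auto
      have "eqv A \<alpha> (fst p) (fst q)" "eqv B \<beta> (snd p) (snd q)"
        using pq(3) rAe rBe pA unfolding h_def by auto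
      hence "eqv (A \<times> B) (prodop \<alpha> \<beta>) p q" using eqvP pA by blast
      thus "p = q" using rPe pA by metis
    qed
    show "h ` rP ` (A \<times> B) = rA ` A \<times> rB ` B"
    proof
      show "h ` rP ` (A \<times> B) \<subseteq> rA ` A \<times> rB ` B" unfolding h_def using rPi by fastforce
      show "rA ` A \<times> rB ` B \<subseteq> h ` rP ` (A \<times> B)"
      proof
        fix y assume "y \<in> rA ` A \<times> rB ` B"
        then obtain a b where ab: "a \<in> A" "b \<in> B" "y = (rA a, rB b)" by blast
        have "h (rP (a, b)) = y" unfolding h_def using rPfst[of "(a,b)"] ab by simp
        thus "y \<in> h ` rP ` (A \<times> B)" using ab by blast
      qed
    qed
  qed
  moreover have "\<forall>p\<in>rP ` (A \<times> B). \<forall>q\<in>rP ` (A \<times> B). h (rP (prodop \<alpha> \<beta> p q)) =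
      prodop (\<lambda>x y. rA (\<alpha> x y)) (\<lambda>x y. rB (\<beta> x y)) (h p) (h q)"
  proof (intro ballI)
    fix p q assume pq: "p \<in> rP ` (A \<times> B)" "q \<in> rP ` (A \<times> B)"
    have pA: "p \<in> A \<times> B" "q \<in> A \<times> B" using pq rPi by auto
    have pq2: "prodop \<alpha> \<beta> p q \<in> A \<times> B" using cs_closed[OF cs_prod[OF cA cB]] pA by blast
    have "h (rP (prodop \<alpha> \<beta> p q)) = (rA (\<alpha> (fst p) (fst q)), rB (\<beta> (snd p) (snd q)))"
      unfolding h_def using rPfst[OF pq2] by (simp add: prodop_def)
    moreover have "rA (\<alpha> (rA (fst p)) (rA (fst q))) = rA (\<alpha> (fst p) (fst q))"
      unfolding rA_def using rep_cong2[OF cA] pA by auto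
    moreover have "rB (\<beta> (rB (snd p)) (rB (snd q))) = rB (\<beta> (snd p) (snd q))"
      unfolding rB_def using rep_cong2[OF cB] pA by auto
    ultimately show "h (rP (prodop \<alpha> \<beta> p q)) = prodop (\<lambda>x y. rA (\<alpha> x y)) (\<lambda>x y. rB (\<beta> x y)) (h p) (h q)"
      unfolding h_def by (simp add: prodop_def)
  qed
  ultimately show ?thesis unfolding iso_def RP RA RB fst_conv snd_conv by blast
qed

lemma iso_iter:
  assumes cP: "cs (fst P) (snd P)" and cA: "cs A \<alpha>" and cB: "cs B \<beta>"
    and i: "iso (fst P) (snd P) (A \<times> B) (prodop \<alpha> \<beta>)"
  shows "cs (fst ((RetS ^^ l) P)) (snd ((RetS ^^ l) P)) \<and>
         cs (fst ((RetS ^^ l) (A, \<alpha>))) (snd ((RetS ^^ l) (A, \<alpha>))) \<and>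
         cs (fst ((RetS ^^ l) (B, \<beta>))) (snd ((RetS ^^ l) (B, \<beta>))) \<and>
         iso (fst ((RetS ^^ l) P)) (snd ((RetS ^^ l) P))
             (fst ((RetS ^^ l) (A, \<alpha>)) \<times> fst ((RetS ^^ l) (B, \<beta>)))
             (prodop (snd ((RetS ^^ l) (A, \<alpha>))) (snd ((RetS ^^ l) (B, \<beta>))))"
proof (induction l)
  case 0
  then show ?case using cP cA cB i by simp
next
  case (Suc l)
  define P' where "P' = (RetS ^^ l) P"
  define A' where "A' = (RetS ^^ l) (A, \<alpha>)"
  define B' where "B' = (RetS ^^ l) (B, \<beta>)"
  have h: "cs (fst P') (snd P')" "cs (fst A') (snd A')" "cs (fst B') (snd B')"
     "iso (fst P') (snd P') (fst A' \<times> fst B') (prodop (snd A') (snd B'))"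
    using Suc.IH unfolding P'_def A'_def B'_def by auto
  define T where "T = (fst A' \<times> fst B', prodop (snd A') (snd B'))"
  have cT: "cs (fst T) (snd T)" unfolding T_def using cs_prod[OF h(2) h(3)] by simp
  have i1: "iso (fst (RetS P')) (snd (RetS P')) (fst (RetS T)) (snd (RetS T))"
    by (rule iso_Ret[OF h(1) cT]) (use h(4) in \<open>simp add: T_def\<close>)
  have i2: "iso (fst (RetS T)) (snd (RetS T)) (fst (RetS A') \<times> fst (RetS B')) (prodop (snd (RetS A')) (snd (RetS B')))"
    using Ret_prod[OF h(2) h(3)] unfolding T_def by simp
  have cR: "cs (fst (RetS P')) (snd (RetS P'))" using cs_Ret[OF h(1)] .
  have i3: "iso (fst (RetS P')) (snd (RetS P')) (fst (RetS A') \<times> fst (RetS B')) (prodop (snd (RetS A')) (snd (RetS B')))"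
    using iso_trans[OF i1 i2] cs_closed[OF cR] by blast
  show ?case using i3 cR cs_Ret[OF h(2)] cs_Ret[OF h(3)] unfolding P'_def A'_def B'_def by simp
qed

lemma Ret_proj: "(fst ((Ret ^^ l) S), fst (snd ((Ret ^^ l) S))) = (RetS ^^ l) (fst S, fst (snd S))"
proof (induction l)
  case 0
  then show ?case by simp
next
  case (Suc l)
  obtain X \<sigma> \<gamma> where e: "(Ret ^^ l) S = (X, \<sigma>, \<gamma>)" by (metis prod_cases3)
  have "(RetS ^^ Suc l) (fst S, fst (snd S)) = RetS ((RetS ^^ l) (fst S, fst (snd S)))" by simp
  also have "\<dots> = RetS (X, \<sigma>)" using Suc.IH e by simp
  finally have a: "(RetS ^^ Suc l) (fst S, fst (snd S)) = RetS (X, \<sigma>)" .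
  have b: "(Ret ^^ Suc l) S = Ret (X, \<sigma>, \<gamma>)" using e by simp
  show ?case unfolding a b by (simp add: Ret_def RetS_def)
qed


lemma cs_of_sol:
  assumes sol: "nd_inv_solution X \<sigma> \<gamma>" and fin: "finite X"
  shows "cs X \<sigma>"
proof -
  have isX: "is_solution X \<sigma> \<gamma>" and ndX: "nondegenerate X \<sigma> \<gamma>" and ivX: "involutive X \<sigma> \<gamma>"
    using sol by (auto simp: nd_inv_solution_def)
  have inj: "\<And>x. x \<in> X \<Longrightarrow> inj_on (\<sigma> x) X" using ndX unfolding nondegenerate_def bij_betw_def by blast
  have L: "\<forall>x\<in>X. \<forall>y\<in>X. \<forall>w\<in>X. \<sigma> (\<sigma> x y) w = x \<longrightarrow> (\<forall>z\<in>X. \<sigma> x (\<sigma> y z) = \<sigma> (\<sigma> x y) (\<sigma> w z))"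
  proof (intro ballI impI)
    fix x y w z assume a: "x \<in> X" "y \<in> X" "w \<in> X" "\<sigma> (\<sigma> x y) w = x" "z \<in> X"
    have g: "\<gamma> y x \<in> X" "\<sigma> x y \<in> X" using sol_closed[OF isX a(1,2)] by auto
    have "\<sigma> (\<sigma> x y) (\<gamma> y x) = x" using inv_comp[OF ivX a(1,2)] by simp
    hence "w = \<gamma> y x" using inj[OF g(2)] a g by (metis inj_onD)
    thus "\<sigma> x (\<sigma> y z) = \<sigma> (\<sigma> x y) (\<sigma> w z)" using ybe_comp(1)[OF isX a(1,2,5)] by simp
  qed
  show ?thesis unfolding cs_def using fin sol_closed[OF isX] inj L by blast
qed

lemma iso_T:
  assumes sol: "nd_inv_solution {1..n} \<sigma> \<gamma>"
  shows "iso {1..n^2} (ind_sigma n \<sigma>) ({1..n} \<times> {1..n}) (prodop \<sigma> \<sigma>)"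
proof -
  have isX: "is_solution {1..n} \<sigma> \<gamma>" using sol by (simp add: nd_inv_solution_def)
  define h where "h t = (Tlow n t, Tup n t)" for t
  have "bij_betw h {1..n^2} ({1..n} \<times> {1..n})"
    unfolding bij_betw_def
  proof
    show "inj_on h {1..n^2}"
    proof (rule inj_onI)
      fix t u assume "t \<in> {1..n^2}" "u \<in> {1..n^2}" "h t = h u"
      thus "t = u" unfolding h_def by (metis Tsym_Tlow_Tup prod.inject)
    qed
    show "h ` {1..n^2} = {1..n} \<times> {1..n}"
    proof
      show "h ` {1..n^2} \<subseteq> {1..n} \<times> {1..n}" unfolding h_def using Tlow_in Tup_in by blast
      show "{1..n} \<times> {1..n} \<subseteq> h ` {1..n^2}"
      proof
        fix p assume "p \<in> {1..n} \<times> {1..n}"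
        then obtain i k where ik: "i \<in> {1..n}" "k \<in> {1..n}" "p = (i, k)" by blast
        have "h (Tsym n i k) = p" unfolding h_def using ik by simp
        thus "p \<in> h ` {1..n^2}" using Tsym_in[OF ik(1,2)] by blast
      qed
    qed
  qed
  moreover have "\<forall>t\<in>{1..n^2}. \<forall>u\<in>{1..n^2}. h (ind_sigma n \<sigma> t u) = prodop \<sigma> \<sigma> (h t) (h u)"
  proof (intro ballI)
    fix t u assume tu: "t \<in> {1..n^2}" "u \<in> {1..n^2}"
    have m: "\<sigma> (Tlow n t) (Tlow n u) \<in> {1..n}" "\<sigma> (Tup n t) (Tup n u) \<in> {1..n}"
      using sol_closed[OF isX] Tlow_in Tup_in tu by auto
    show "h (ind_sigma n \<sigma> t u) = prodop \<sigma> \<sigma> (h t) (h u)"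
      unfolding h_def ind_sigma_def prodop_def using m by simp
  qed
  ultimately show ?thesis unfolding iso_def by blast
qed

lemma card_T:
  assumes sol: "nd_inv_solution {1..n} \<sigma> \<gamma>"
  shows "card (fst ((Ret ^^ l) ({1..n^2}, ind_sigma n \<sigma>, ind_gamma n \<gamma>))) =
         (card (fst ((Ret ^^ l) ({1..n}, \<sigma>, \<gamma>))))^2"
proof -
  have cX: "cs {1..n} \<sigma>" using cs_of_sol[OF sol] by simp
  have cX2: "cs {1..n^2} (ind_sigma n \<sigma>)" using cs_of_sol[OF induced_sol[OF sol]] by simp
  have p1: "fst ((Ret ^^ l) ({1..n^2}, ind_sigma n \<sigma>, ind_gamma n \<gamma>)) = fst ((RetS ^^ l) ({1..n^2}, ind_sigma n \<sigma>))"
    using arg_cong[OF Ret_proj[of l "({1..n^2}, ind_sigma n \<sigma>, ind_gamma n \<gamma>)"], of fst] by simp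
  have p2: "fst ((Ret ^^ l) ({1..n}, \<sigma>, \<gamma>)) = fst ((RetS ^^ l) ({1..n}, \<sigma>))"
    using arg_cong[OF Ret_proj[of l "({1..n}, \<sigma>, \<gamma>)"], of fst] by simp
  have "iso (fst ((RetS ^^ l) ({1..n^2}, ind_sigma n \<sigma>))) (snd ((RetS ^^ l) ({1..n^2}, ind_sigma n \<sigma>)))
      (fst ((RetS ^^ l) ({1..n}, \<sigma>)) \<times> fst ((RetS ^^ l) ({1..n}, \<sigma>)))
      (prodop (snd ((RetS ^^ l) ({1..n}, \<sigma>))) (snd ((RetS ^^ l) ({1..n}, \<sigma>))))"
    using iso_iter[of "({1..n^2}, ind_sigma n \<sigma>)" "{1..n}" \<sigma> "{1..n}" \<sigma> l] cX cX2 iso_T[OF sol] by simp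
  hence "card (fst ((RetS ^^ l) ({1..n^2}, ind_sigma n \<sigma>))) = card (fst ((RetS ^^ l) ({1..n}, \<sigma>)) \<times> fst ((RetS ^^ l) ({1..n}, \<sigma>)))"
    by (rule iso_card)
  thus ?thesis unfolding p1 p2 by (simp add: card_cartesian_product power2_eq_square)
qed


theorem theorem3p12:
  fixes n :: nat and \<sigma> \<gamma> :: "nat \<Rightarrow> nat \<Rightarrow> nat"
  assumes sol: "nd_inv_solution {1..n} \<sigma> \<gamma>"
  defines "n2 \<equiv> fst (induced (n, \<sigma>, \<gamma>))"
      and "g \<equiv> fst (snd (induced (n, \<sigma>, \<gamma>)))"
      and "f \<equiv> snd (snd (induced (n, \<sigma>, \<gamma>)))"
  shows
    "(\<forall>k::nat. k \<ge> 1 \<longrightarrow>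
        (case (induced ^^ k) (n, \<sigma>, \<gamma>) of (N, s, t) \<Rightarrow>
           N = n ^ (2 ^ k) \<and> nd_inv_solution {1..N} s t))
     \<and> (irretractable {1..n} \<sigma> \<gamma> \<longrightarrow> irretractable {1..n2} g f)
     \<and> (\<forall>l. mp_level {1..n} \<sigma> \<gamma> l \<longrightarrow> mp_level {1..n2} g f l)
     \<and> (decomposable {1..n} \<sigma> \<gamma> \<longrightarrow> decomposable {1..n2} g f)
     \<and> (\<forall>m. of_class {1..n} \<sigma> \<gamma> m \<longrightarrow> of_class {1..n2} g f m)
     \<and> (indecomposable {1..n} \<sigma> \<gamma> \<and> condC {1..n} \<sigma> 1 \<longrightarrow>
          indecomposable {1..n2} g f \<and> condC {1..n2} g 1
          \<and> (\<forall>k::nat. k \<ge> 1 \<longrightarrow>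
               (case (induced ^^ k) (n, \<sigma>, \<gamma>) of (N, s, t) \<Rightarrow>
                  N = n ^ (2 ^ k) \<and> indecomposable {1..N} s t)))"
proof -
  have ind: "induced (n, \<sigma>, \<gamma>) = (n^2, ind_sigma n \<sigma>, ind_gamma n \<gamma>)" by (simp add: induced_def)
  have n2: "n2 = n^2" and g: "g = ind_sigma n \<sigma>" and f: "f = ind_gamma n \<gamma>"
    unfolding n2_def g_def f_def ind by simp_all
  have c1: "\<forall>k::nat. k \<ge> 1 \<longrightarrow>
        (case (induced ^^ k) (n, \<sigma>, \<gamma>) of (N, s, t) \<Rightarrow> N = n ^ (2 ^ k) \<and> nd_inv_solution {1..N} s t)"
  proof (intro allI impI)
    fix k :: nat
    obtain N s t where e: "(induced ^^ k) (n, \<sigma>, \<gamma>) = (N, s, t)" by (metis prod_cases3)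
    show "case (induced ^^ k) (n, \<sigma>, \<gamma>) of (N, s, t) \<Rightarrow> N = n ^ (2 ^ k) \<and> nd_inv_solution {1..N} s t"
    proof -
      have h: "N = n ^ (2 ^ k)" "nd_inv_solution {1..N} s t" using iter[OF sol, of k] e by auto
      thus ?thesis using e by simp
    qed
  qed
  have cardeq: "\<And>l. card (fst ((Ret ^^ l) ({1..n2}, g, f))) = 1 \<longleftrightarrow> card (fst ((Ret ^^ l) ({1..n}, \<sigma>, \<gamma>))) = 1"
    unfolding n2 g f card_T[OF sol] by (simp add: power2_eq_square)
  have c2: "irretractable {1..n} \<sigma> \<gamma> \<longrightarrow> irretractable {1..n2} g f"
    unfolding irretractable_def retractable_def using cardeq by simp
  have c3: "\<forall>l. mp_level {1..n} \<sigma> \<gamma> l \<longrightarrow> mp_level {1..n2} g f l"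
    unfolding mp_level_def using cardeq by simp
  have c4: "decomposable {1..n} \<sigma> \<gamma> \<longrightarrow> decomposable {1..n2} g f"
    unfolding n2 g f using induced_decomp[OF sol] by blast
  have c5: "\<forall>m. of_class {1..n} \<sigma> \<gamma> m \<longrightarrow> of_class {1..n2} g f m"
    unfolding n2 g f using of_class_T[OF sol] by blast
  have c6: "indecomposable {1..n} \<sigma> \<gamma> \<and> condC {1..n} \<sigma> 1 \<longrightarrow>
          indecomposable {1..n2} g f \<and> condC {1..n2} g 1
          \<and> (\<forall>k::nat. k \<ge> 1 \<longrightarrow>
               (case (induced ^^ k) (n, \<sigma>, \<gamma>) of (N, s, t) \<Rightarrow>
                  N = n ^ (2 ^ k) \<and> indecomposable {1..N} s t))"
  proof (intro impI conjI allI)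
    assume a: "indecomposable {1..n} \<sigma> \<gamma> \<and> condC {1..n} \<sigma> 1"
    have cc: "condC {1..n^2} (ind_sigma n \<sigma>) 1" using condC_T[OF sol] a by blast
    show "condC {1..n2} g 1" using cc unfolding n2 g .
    have "{1..n^2} = {} \<or> (1::nat) \<in> {1..n^2}" by auto
    thus "indecomposable {1..n2} g f" unfolding n2 g f using condC_indec[OF induced_sol[OF sol] cc] by blast
    fix k :: nat
    assume "k \<ge> 1"
    obtain N s t where e: "(induced ^^ k) (n, \<sigma>, \<gamma>) = (N, s, t)" by (metis prod_cases3)
    have h: "N = n ^ (2 ^ k)" "nd_inv_solution {1..N} s t" "condC {1..N} s 1"
      using iter[OF sol, of k] e a by auto
    have "{1..N} = {} \<or> (1::nat) \<in> {1..N}" by auto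
    hence "indecomposable {1..N} s t" using condC_indec[OF h(2) h(3)] by blast
    thus "case (induced ^^ k) (n, \<sigma>, \<gamma>) of (N, s, t) \<Rightarrow> N = n ^ (2 ^ k) \<and> indecomposable {1..N} s t"
      using e h(1) by simp
  qed
  show ?thesis using c1 c2 c3 c4 c5 c6 by blast
qed


end
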